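(* A binary relation $\succsim$ on $l_\infty$ satisfies Weak order, Monotonicity, Continuity, ICRP, Convexity, ISU and IFPIS if and only if there exists a unique nonempty convex weak$^\star$-compact set $D\subseteq pa(\mathbb N)\cap\Delta$ such that $$I(x)=\min_{\mu\in D}\langle x,\mu\rangle$$ is the unique constant equivalent representing $\succsim$.
   Context: $l_\infty$: real bounded sequences indexed by $\mathbb N$; $\theta\in\mathbb R$ also a constant sequence; $x\ge y$ coordinatewise. $ba(\mathbb N)$: norm dual of $l_\infty$, pairing $\langle x,\mu\rangle$, weak$^\star$ topology. $\Delta$: finitely additive probability measures on $2^{\mathbb N}$; $pa(\mathbb N)$: $\mu\in ba(\mathbb N)$ with $\mu(\{n\})=0$ for all $n$. A finite permutation is a bijection $\sigma:\mathbb N\to\mathbb N$ fixing all but finitely many points; $d_\sigma=(d_{\sigma(0)},d_{\sigma(1)},\dots)$. Constant equivalent: $I$ with $x\sim I(x)$, $x\succsim y\iff I(x)\ge I(y)$. Weak order: complete, transitive. Monotonicity: $x\ge y\Rightarrow x\succsim y$, $1\succ0$. Continuity: for $x\succsim y\succsim z$ the sets $\{\alpha\in[0,1]:\alpha x+(1-\alpha)z\succsim y\}$, $\{\alpha:y\succsim\alpha x+(1-\alpha)z\}$ are closed. ICRP: $x\succsim y\Rightarrow x+\theta\succsim y+\theta$. Convexity: $x\succsim\theta,y\succsim\theta\Rightarrow\lambda x+(1-\lambda)y\succsim\theta$. ISU: $x\succsim y$, $\alpha\ge0\Rightarrow\alpha x\succsim\alpha y$. IFPIS: for every finite permutation $\sigma$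 and $x,d\in l_\infty$, $x+d\succsim x$ implies $x+d_\sigma\succsim x$. *)

theory Defs
  imports "HOL-Analysis.Analysis"
begin

definition linf :: "(nat \<Rightarrow> real) set" where
  "linf = {x. bounded (range x)}"

definition const_seq :: "real \<Rightarrow> (nat \<Rightarrow> real)" where
  "const_seq \<theta> = (\<lambda>_. \<theta>)"

definition sup_norm :: "(nat \<Rightarrow> real) \<Rightarrow> real" where
  "sup_norm x = (SUP n. \<bar>x n\<bar>)"

text \<open>ba(N), the norm dual of l_infinity: bounded linear functionals on linf,
  normalised to be 0 outside linf (so each element has a canonical representative).
  The pairing <x, mu> is just mu x; the charge of A is mu (indicator A).\<close>
definition ba_N :: "((nat \<Rightarrow> real) \<Rightarrow> real) set" where
  "ba_N = {L. (\<forall>x\<in>linf. \<forall>y\<in>linf. L (\<lambda>n. x n + y n) = L x + L y)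
            \<and> (\<forall>c::real. \<forall>x\<in>linf. L (\<lambda>n. c * x n) = c * L x)
            \<and> (\<exists>B. \<forall>x\<in>linf. \<bar>L x\<bar> \<le> B * sup_norm x)
            \<and> (\<forall>x. x \<notin> linf \<longrightarrow> L x = 0)}"

definition Delta_N :: "((nat \<Rightarrow> real) \<Rightarrow> real) set" where
  "Delta_N = {L\<in>ba_N. (\<forall>A::nat set. L (indicator A) \<ge> 0) \<and> L (indicator UNIV) = 1}"

text \<open>pa(N): purely finitely additive in the sense mu({n}) = 0 for all n.\<close>
definition pa_N :: "((nat \<Rightarrow> real) \<Rightarrow> real) set" where
  "pa_N = {L\<in>ba_N. \<forall>n. L (indicator {n}) = 0}"

text \<open>The weak-star topology on ba(N) is the topology of pointwise convergence on linf;
  since elements of ba_N are 0 off linf, it is the subspace topology of the product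
  topology on the function type, so weak-star compactness is "compact".\<close>

definition convex_fun_set :: "((nat \<Rightarrow> real) \<Rightarrow> real) set \<Rightarrow> bool" where
  "convex_fun_set D \<longleftrightarrow> (\<forall>\<mu>\<in>D. \<forall>\<nu>\<in>D. \<forall>t::real. 0 \<le> t \<and> t \<le> 1 \<longrightarrow>
       (\<lambda>x. t * \<mu> x + (1 - t) * \<nu> x) \<in> D)"

definition weak_order :: "((nat \<Rightarrow> real) \<Rightarrow> (nat \<Rightarrow> real) \<Rightarrow> bool) \<Rightarrow> bool" where
  "weak_order R \<longleftrightarrow> (\<forall>x\<in>linf. \<forall>y\<in>linf. R x y \<or> R y x)
     \<and> (\<forall>x\<in>linf. \<forall>y\<in>linf. \<forall>z\<in>linf. R x y \<and> R y z \<longrightarrow> R x z)"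

definition monotonicity :: "((nat \<Rightarrow> real) \<Rightarrow> (nat \<Rightarrow> real) \<Rightarrow> bool) \<Rightarrow> bool" where
  "monotonicity R \<longleftrightarrow> (\<forall>x\<in>linf. \<forall>y\<in>linf. (\<forall>n. x n \<ge> y n) \<longrightarrow> R x y)
     \<and> R (const_seq 1) (const_seq 0) \<and> \<not> R (const_seq 0) (const_seq 1)"

definition continuity :: "((nat \<Rightarrow> real) \<Rightarrow> (nat \<Rightarrow> real) \<Rightarrow> bool) \<Rightarrow> bool" where
  "continuity R \<longleftrightarrow> (\<forall>x\<in>linf. \<forall>y\<in>linf. \<forall>z\<in>linf. R x y \<and> R y z \<longrightarrow>
       closed {\<alpha>\<in>{0..1}. R (\<lambda>n. \<alpha> * x n + (1 - \<alpha>) * z n) y}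
     \<and> closed {\<alpha>\<in>{0..1}. R y (\<lambda>n. \<alpha> * x n + (1 - \<alpha>) * z n)})"

definition ICRP :: "((nat \<Rightarrow> real) \<Rightarrow> (nat \<Rightarrow> real) \<Rightarrow> bool) \<Rightarrow> bool" where
  "ICRP R \<longleftrightarrow> (\<forall>x\<in>linf. \<forall>y\<in>linf. \<forall>\<theta>::real. R x y \<longrightarrow> R (\<lambda>n. x n + \<theta>) (\<lambda>n. y n + \<theta>))"

definition convexity :: "((nat \<Rightarrow> real) \<Rightarrow> (nat \<Rightarrow> real) \<Rightarrow> bool) \<Rightarrow> bool" where
  "convexity R \<longleftrightarrow> (\<forall>x\<in>linf. \<forall>y\<in>linf. \<forall>\<theta>::real. \<forall>t::real.
      R x (const_seq \<theta>) \<and> R y (const_seq \<theta>) \<and> 0 \<le> t \<and> t \<le> 1 \<longrightarrow>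
      R (\<lambda>n. t * x n + (1 - t) * y n) (const_seq \<theta>))"

definition ISU :: "((nat \<Rightarrow> real) \<Rightarrow> (nat \<Rightarrow> real) \<Rightarrow> bool) \<Rightarrow> bool" where
  "ISU R \<longleftrightarrow> (\<forall>x\<in>linf. \<forall>y\<in>linf. \<forall>\<alpha>::real. R x y \<and> \<alpha> \<ge> 0 \<longrightarrow>
      R (\<lambda>n. \<alpha> * x n) (\<lambda>n. \<alpha> * y n))"

definition finite_perm :: "(nat \<Rightarrow> nat) \<Rightarrow> bool" where
  "finite_perm \<sigma> \<longleftrightarrow> bij \<sigma> \<and> finite {n. \<sigma> n \<noteq> n}"

definition IFPIS :: "((nat \<Rightarrow> real) \<Rightarrow> (nat \<Rightarrow> real) \<Rightarrow> bool) \<Rightarrow> bool" where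
  "IFPIS R \<longleftrightarrow> (\<forall>\<sigma>. finite_perm \<sigma> \<longrightarrow> (\<forall>x\<in>linf. \<forall>d\<in>linf.
      R (\<lambda>n. x n + d n) x \<longrightarrow> R (\<lambda>n. x n + d (\<sigma> n)) x))"

definition constant_equivalent ::
  "((nat \<Rightarrow> real) \<Rightarrow> (nat \<Rightarrow> real) \<Rightarrow> bool) \<Rightarrow> ((nat \<Rightarrow> real) \<Rightarrow> real) \<Rightarrow> bool" where
  "constant_equivalent R I \<longleftrightarrow>
     (\<forall>x\<in>linf. R x (const_seq (I x)) \<and> R (const_seq (I x)) x)
   \<and> (\<forall>x\<in>linf. \<forall>y\<in>linf. R x y \<longleftrightarrow> I x \<ge> I y)"

end

theory Submission
  imports Defs
begin


lemma linf_iff: "x \<in> linf \<longleftrightarrow> (\<exists>M. \<forall>n. \<bar>x n\<bar> \<le> M)"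
  unfolding linf_def bounded_iff by (auto simp: real_norm_def)

lemma linfI: "(\<And>n. \<bar>x n\<bar> \<le> M) \<Longrightarrow> x \<in> linf"
  using linf_iff by blast

lemma linfE: assumes "x \<in> linf" obtains M where "\<And>n. \<bar>x n\<bar> \<le> M" "M \<ge> 0"
proof -
  obtain M where "\<forall>n. \<bar>x n\<bar> \<le> M" using assms linf_iff by blast
  then show ?thesis using that[of M] by (meson abs_ge_zero order_trans)
qed

lemma linf_add: "x \<in> linf \<Longrightarrow> y \<in> linf \<Longrightarrow> (\<lambda>n. x n + y n) \<in> linf"
proof -
  assume "x \<in> linf" "y \<in> linf"
  then obtain A B where "\<And>n. \<bar>x n\<bar> \<le> A" "\<And>n. \<bar>y n\<bar> \<le> B" by (metis linfE)
  then show ?thesis by (intro linfI[of _ "A + B"]) (meson abs_triangle_ineq add_mono order_trans)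
qed

lemma linf_scal: "x \<in> linf \<Longrightarrow> (\<lambda>n. c * x n) \<in> linf"
proof -
  assume "x \<in> linf"
  then obtain A where A: "\<And>n. \<bar>x n\<bar> \<le> A" by (metis linfE)
  show ?thesis
    by (rule linfI[of _ "\<bar>c\<bar> * A"]) (simp add: abs_mult A mult_left_mono)
qed

lemma linf_neg: "x \<in> linf \<Longrightarrow> (\<lambda>n. - x n) \<in> linf"
  using linf_scal[of x "-1"] by simp

lemma linf_diff: "x \<in> linf \<Longrightarrow> y \<in> linf \<Longrightarrow> (\<lambda>n. x n - y n) \<in> linf"
  using linf_add[OF _ linf_neg] by simp

lemma linf_const: "(\<lambda>n. c) \<in> linf"
  by (rule linfI[of _ "\<bar>c\<bar>"]) simp

lemma linf_const_seq: "const_seq c \<in> linf"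
  by (simp add: const_seq_def linf_const)

lemma linf_indicator: "(indicator A :: nat \<Rightarrow> real) \<in> linf"
  by (rule linfI[of _ 1]) (simp add: indicator_def)

lemma linf_sum: "finite F \<Longrightarrow> (\<And>i. i \<in> F \<Longrightarrow> f i \<in> linf) \<Longrightarrow> (\<lambda>n. \<Sum>i\<in>F. f i n) \<in> linf"
proof (induction F rule: finite_induct)
  case empty
  then show ?case using linf_const[of 0] by simp
next
  case (insert a F)
  then show ?case using linf_add[of "f a" "\<lambda>n. \<Sum>i\<in>F. f i n"] by simp
qed

lemma linf_comp: "x \<in> linf \<Longrightarrow> (\<lambda>n. x (\<sigma> n)) \<in> linf"
  by (metis linfE linfI)

lemma sup_norm_ge: "x \<in> linf \<Longrightarrow> \<bar>x n\<bar> \<le> sup_norm x"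
  unfolding sup_norm_def
  by (rule cSUP_upper) (auto simp: bdd_above_def linf_iff)

lemma sup_norm_le: "(\<And>n. \<bar>x n\<bar> \<le> M) \<Longrightarrow> sup_norm x \<le> M"
  unfolding sup_norm_def by (rule cSUP_least) auto

lemma sup_norm_nonneg: "x \<in> linf \<Longrightarrow> 0 \<le> sup_norm x"
  using sup_norm_ge[of x 0] by linarith

definition lin :: "((nat \<Rightarrow> real) \<Rightarrow> real) \<Rightarrow> bool" where
  "lin L \<longleftrightarrow> (\<forall>x\<in>linf. \<forall>y\<in>linf. L (\<lambda>n. x n + y n) = L x + L y)
            \<and> (\<forall>c::real. \<forall>x\<in>linf. L (\<lambda>n. c * x n) = c * L x)"

lemma ba_lin: "L \<in> ba_N \<Longrightarrow> lin L"
  unfolding ba_N_def lin_def by blast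

lemma lin_add: "lin L \<Longrightarrow> x \<in> linf \<Longrightarrow> y \<in> linf \<Longrightarrow> L (\<lambda>n. x n + y n) = L x + L y"
  unfolding lin_def by blast

lemma lin_scal: "lin L \<Longrightarrow> x \<in> linf \<Longrightarrow> L (\<lambda>n. c * x n) = c * L x"
  unfolding lin_def by blast

lemma lin_zero: "lin L \<Longrightarrow> L (\<lambda>n. 0) = 0"
  using lin_scal[of L "\<lambda>n. 0" 0] linf_const[of 0] by simp

lemma lin_neg: "lin L \<Longrightarrow> x \<in> linf \<Longrightarrow> L (\<lambda>n. - x n) = - L x"
  using lin_scal[of L x "-1"] by simp

lemma lin_diff: "lin L \<Longrightarrow> x \<in> linf \<Longrightarrow> y \<in> linf \<Longrightarrow> L (\<lambda>n. x n - y n) = L x - L y"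
  using lin_add[of L x "\<lambda>n. - y n"] lin_neg[of L y] linf_neg[of y] by simp

lemma lin_sum: assumes lL: "lin L" shows "finite F \<Longrightarrow> (\<And>i. i \<in> F \<Longrightarrow> f i \<in> linf) \<Longrightarrow>
   L (\<lambda>n. \<Sum>i\<in>F. f i n) = (\<Sum>i\<in>F. L (f i))"
proof (induction F rule: finite_induct)
  case empty
  then show ?case using lin_zero[OF lL] by simp
next
  case (insert a F)
  then show ?case
    using lL lin_add[of L "f a" "\<lambda>n. \<Sum>i\<in>F. f i n"] linf_sum[of F f] by simp
qed

lemma Delta_const: "L \<in> Delta_N \<Longrightarrow> L (\<lambda>n. c) = c"
proof -
  assume L: "L \<in> Delta_N"
  then have "lin L" "L (indicator UNIV) = 1" unfolding Delta_N_def by (auto intro: ba_lin)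
  moreover have "L (\<lambda>n. c * (indicator UNIV :: nat \<Rightarrow> real) n) = c * L (indicator UNIV)"
    using lin_scal[of L "indicator UNIV" c] linf_indicator calculation by blast
  ultimately show ?thesis by simp
qed

lemma Delta_pos:
  assumes L: "L \<in> Delta_N" and x: "x \<in> linf" and pos: "\<And>n. 0 \<le> x n"
  shows "0 \<le> L x"
proof -
  have lL: "lin L" using L unfolding Delta_N_def by (auto intro: ba_lin)
  have indpos: "\<And>A. L (indicator A) \<ge> 0" using L unfolding Delta_N_def by auto
  obtain B where B: "\<forall>z\<in>linf. \<bar>L z\<bar> \<le> B * sup_norm z" using L unfolding Delta_N_def ba_N_def by auto
  obtain M where M: "\<And>n. \<bar>x n\<bar> \<le> M" "M \<ge> 0" using x linfE by blast
  have kbound: "L x \<ge> - \<bar>B\<bar> / real k" if k: "k > 0" for k :: nat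
  proof -
    define s where "s = (\<lambda>n. real_of_int \<lfloor>real k * x n\<rfloor> / real k)"
    define V where "V = range s"
    have sub: "V \<subseteq> (\<lambda>j. real_of_int j / real k) ` {0..\<lceil>real k * M\<rceil>}"
    proof
      fix v assume "v \<in> V"
      then obtain n where v: "v = s n" unfolding V_def by auto
      have "0 \<le> \<lfloor>real k * x n\<rfloor>" using pos[of n] by simp
      moreover have "\<lfloor>real k * x n\<rfloor> \<le> \<lceil>real k * M\<rceil>"
      proof -
        have "real k * x n \<le> real k * M" using M(1)[of n] pos[of n] by (intro mult_left_mono) auto
        then show ?thesis by (meson floor_mono floor_le_ceiling order_trans)
      qed
      ultimately show "v \<in> (\<lambda>j. real_of_int j / real k) ` {0..\<lceil>real k * M\<rceil>}"
        using v unfolding s_def by auto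
    qed
    then have finV: "finite V" using finite_subset by blast
    have srep: "s = (\<lambda>n. \<Sum>v\<in>V. v * indicator {m. s m = v} n)"
    proof
      fix n
      have "(\<Sum>v\<in>V. v * indicator {m. s m = v} n) = (\<Sum>v\<in>V. if v = s n then s n else 0)"
        by (rule sum.cong) (auto simp: indicator_def)
      also have "\<dots> = s n" using finV by (simp add: V_def)
      finally show "s n = (\<Sum>v\<in>V. v * indicator {m. s m = v} n)" by simp
    qed
    have Ls: "L s = (\<Sum>v\<in>V. L (\<lambda>n. v * indicator {m. s m = v} n))"
      by (subst srep, rule lin_sum[OF lL finV]) (rule linf_scal[OF linf_indicator])
    also have "\<dots> = (\<Sum>v\<in>V. v * L (indicator {m. s m = v}))"
      by (rule sum.cong) (auto intro!: lin_scal[OF lL linf_indicator])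
    also have "\<dots> \<ge> 0"
    proof (rule sum_nonneg)
      fix v assume "v \<in> V"
      then have "v \<ge> 0" unfolding V_def s_def using pos by auto
      then show "0 \<le> v * L (indicator {m. s m = v})" using indpos by simp
    qed
    finally have Ls0: "L s \<ge> 0" .
    have sl: "s \<in> linf" by (subst srep, rule linf_sum[OF finV]) (rule linf_scal[OF linf_indicator])
    have bd: "\<And>n. \<bar>x n - s n\<bar> \<le> 1 / real k"
    proof -
      fix n
      have a: "real_of_int \<lfloor>real k * x n\<rfloor> \<le> real k * x n" by simp
      have b: "real k * x n < real_of_int \<lfloor>real k * x n\<rfloor> + 1" by linarith
      have kp: "real k > 0" using k by simp
      have "s n \<le> x n" unfolding s_def using a kp by (simp add: divide_le_eq mult.commute)
      moreover have "x n - s n \<le> 1 / real k"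
      proof -
        have "x n - s n = (real k * x n - real_of_int \<lfloor>real k * x n\<rfloor>) / real k"
          unfolding s_def using kp by (simp add: field_simps)
        also have "\<dots> \<le> 1 / real k" by (rule divide_right_mono) (use b in linarith, simp)
        finally show ?thesis .
      qed
      ultimately show "\<bar>x n - s n\<bar> \<le> 1 / real k" by simp
    qed
    have dl: "(\<lambda>n. x n - s n) \<in> linf" using linf_diff[OF x sl] .
    have sn: "sup_norm (\<lambda>n. x n - s n) \<le> 1 / real k" by (rule sup_norm_le) (rule bd)
    have sn0: "sup_norm (\<lambda>n. x n - s n) \<ge> 0" using sup_norm_nonneg[OF dl] .
    have "\<bar>L (\<lambda>n. x n - s n)\<bar> \<le> B * sup_norm (\<lambda>n. x n - s n)" using B dl by blast
    also have "\<dots> \<le> \<bar>B\<bar> * sup_norm (\<lambda>n. x n - s n)" using sn0 by (simp add: mult_right_mono)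
    also have "\<dots> \<le> \<bar>B\<bar> * (1 / real k)" using mult_left_mono[OF sn, of "\<bar>B\<bar>"] by simp
    finally have "\<bar>L x - L s\<bar> \<le> \<bar>B\<bar> / real k" using lin_diff[OF lL x sl] by simp
    then show ?thesis using Ls0 by linarith
  qed
  show ?thesis
  proof (rule ccontr)
    assume "\<not> 0 \<le> L x"
    then have neg: "L x < 0" by simp
    obtain k :: nat where k: "real k > \<bar>B\<bar> / (- L x)" using reals_Archimedean2 by blast
    have "\<bar>B\<bar> / (- L x) \<ge> 0" using neg by (intro divide_nonneg_pos) auto
    then have kp: "k > 0" using k by (cases k) auto
    have c: "- L x > 0" using neg by simp
    have h: "\<bar>B\<bar> < real k * (- L x)" using iffD1[OF pos_divide_less_eq[OF c] k] .
    have kr: "real k > 0" using kp by simp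
    have "\<bar>B\<bar> < (- L x) * real k" using h by (simp only: mult.commute)
    then have "\<bar>B\<bar> / real k < - L x" using pos_divide_less_eq[OF kr] by blast
    then show False using kbound[OF kp] by linarith
  qed
qed

lemma Delta_mono: "L \<in> Delta_N \<Longrightarrow> x \<in> linf \<Longrightarrow> y \<in> linf \<Longrightarrow> (\<And>n. y n \<le> x n) \<Longrightarrow> L y \<le> L x"
  using Delta_pos[of L "\<lambda>n. x n - y n"] lin_diff[of L x y] linf_diff[of x y]
  unfolding Delta_N_def by (auto dest: ba_lin)

lemma Delta_le_norm: "L \<in> Delta_N \<Longrightarrow> x \<in> linf \<Longrightarrow> L x \<le> sup_norm x"
  using Delta_mono[of L "\<lambda>n. sup_norm x" x] Delta_const[of L] sup_norm_ge[of x] linf_const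
  by (metis abs_le_D1)

lemma Delta_ge_norm: "L \<in> Delta_N \<Longrightarrow> x \<in> linf \<Longrightarrow> - sup_norm x \<le> L x"
  using Delta_mono[of L x "\<lambda>n. - sup_norm x"] Delta_const[of L] sup_norm_ge[of x] linf_const
  by (metis abs_le_D2 minus_le_iff)


lemma closed_ge_cont:
  fixes f :: "real \<Rightarrow> real"
  assumes "continuous_on {0..1} f"
  shows "closed {\<alpha>\<in>{0..1}. c \<le> f \<alpha>}" "closed {\<alpha>\<in>{0..1}. f \<alpha> \<le> c}"
proof -
  have "{\<alpha>\<in>{0..1}. c \<le> f \<alpha>} = {0..1} \<inter> f -` {c..}" by auto
  then show "closed {\<alpha>\<in>{0..1}. c \<le> f \<alpha>}" using continuous_closed_preimage[OF assms] by simp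
  have "{\<alpha>\<in>{0..1}. f \<alpha> \<le> c} = {0..1} \<inter> f -` {..c}" by auto
  then show "closed {\<alpha>\<in>{0..1}. f \<alpha> \<le> c}" using continuous_closed_preimage[OF assms] by simp
qed

lemma pa_finite_shift:
  assumes L: "L \<in> pa_N" and z: "z \<in> linf" and fin: "finite F" and supp: "\<And>n. n \<notin> F \<Longrightarrow> w n = 0"
  shows "L (\<lambda>n. z n + w n) = L z"
proof -
  have lL: "lin L" using L unfolding pa_N_def by (auto intro: ba_lin)
  have wrep: "w = (\<lambda>m. \<Sum>n\<in>F. w n * indicator {n} m)"
  proof
    fix m
    have "(\<Sum>n\<in>F. w n * indicator {n} m) = (\<Sum>n\<in>F. if n = m then w m else 0)"
      by (rule sum.cong) (auto simp: indicator_def)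
    also have "\<dots> = w m" using fin supp by auto
    finally show "w m = (\<Sum>n\<in>F. w n * indicator {n} m)" by simp
  qed
  have wl: "w \<in> linf" by (subst wrep, rule linf_sum[OF fin]) (rule linf_scal[OF linf_indicator])
  have "L w = (\<Sum>n\<in>F. L (\<lambda>m. w n * indicator {n} m))"
    by (subst wrep, rule lin_sum[OF lL fin]) (rule linf_scal[OF linf_indicator])
  also have "\<dots> = (\<Sum>n\<in>F. w n * L (indicator {n}))"
    by (rule sum.cong) (auto intro!: lin_scal[OF lL linf_indicator])
  also have "\<dots> = 0" using L unfolding pa_N_def by simp
  finally show ?thesis using lin_add[OF lL z wl] by simp
qed

lemma partA:
  fixes R :: "(nat \<Rightarrow> real) \<Rightarrow> (nat \<Rightarrow> real) \<Rightarrow> bool"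
  assumes ne: "D \<noteq> {}" and sub: "D \<subseteq> pa_N \<inter> Delta_N"
    and mn: "\<forall>x\<in>linf. \<exists>\<mu>\<in>D. \<forall>\<nu>\<in>D. \<mu> x \<le> \<nu> x"
    and ce: "constant_equivalent R (\<lambda>x. INF \<mu>\<in>D. \<mu> x)"
  shows "weak_order R \<and> monotonicity R \<and> continuity R \<and> ICRP R \<and> convexity R \<and> ISU R \<and> IFPIS R"
proof -
  define I where "I = (\<lambda>x. INF \<mu>\<in>D. \<mu> x)"
  have Rce: "\<And>x y. x \<in> linf \<Longrightarrow> y \<in> linf \<Longrightarrow> R x y \<longleftrightarrow> I y \<le> I x"
    using ce unfolding constant_equivalent_def I_def by blast
  have DD: "\<And>\<mu>. \<mu> \<in> D \<Longrightarrow> \<mu> \<in> Delta_N" using sub by auto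
  have Dp: "\<And>\<mu>. \<mu> \<in> D \<Longrightarrow> \<mu> \<in> pa_N" using sub by auto
  have Dl: "\<And>\<mu>. \<mu> \<in> D \<Longrightarrow> lin \<mu>" using DD unfolding Delta_N_def by (auto intro: ba_lin)
  have min: "\<exists>\<mu>\<in>D. I x = \<mu> x" if x: "x \<in> linf" for x
  proof -
    obtain \<mu> where \<mu>: "\<mu> \<in> D" "\<forall>\<nu>\<in>D. \<mu> x \<le> \<nu> x" using mn x by blast
    have "I x = \<mu> x" unfolding I_def by (rule cInf_eq_minimum) (use \<mu> in auto)
    then show ?thesis using \<mu> by blast
  qed
  have low: "I x \<le> \<mu> x" if xx: "x \<in> linf" and mm: "\<mu> \<in> D" for x \<mu>
  proof -
    have "\<exists>\<mu>0\<in>D. \<forall>\<nu>\<in>D. \<mu>0 x \<le> \<nu> x" using mn xx by simp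
    then obtain \<mu>0 where \<mu>0: "\<mu>0 \<in> D" "\<forall>\<nu>\<in>D. \<mu>0 x \<le> \<nu> x" by blast
    have bb: "bdd_below ((\<lambda>\<nu>. \<nu> x) ` D)" by (rule bdd_belowI2[of D "\<mu>0 x"]) (use \<mu>0 in simp)
    show ?thesis unfolding I_def by (rule cINF_lower[OF bb mm])
  qed
  have Ige: "c \<le> I u" if "u \<in> linf" "\<And>\<mu>. \<mu> \<in> D \<Longrightarrow> c \<le> \<mu> u" for u c
    using min[OF that(1)] that(2) by auto
  have Iconst: "I (\<lambda>n. c) = c" for c
    using min[OF linf_const, of c] Delta_const DD by auto
  have Icsq: "I (const_seq c) = c" for c using Iconst by (simp add: const_seq_def)
  have Imono: "I y \<le> I x" if "x \<in> linf" "y \<in> linf" "\<And>n. y n \<le> x n" for x y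
  proof (rule Ige[OF that(1)])
    fix \<mu> assume m: "\<mu> \<in> D"
    show "I y \<le> \<mu> x" using low[OF that(2) m] Delta_mono[OF DD[OF m] that] by linarith
  qed
  have Ilip: "I v - M \<le> I u" if "u \<in> linf" "v \<in> linf" "\<And>n. \<bar>u n - v n\<bar> \<le> M" for u v M
  proof (rule Ige[OF that(1)])
    fix \<mu> assume "\<mu> \<in> D"
    have "\<mu> (\<lambda>n. v n - u n) \<le> sup_norm (\<lambda>n. v n - u n)"
      using Delta_le_norm[OF DD[OF \<open>\<mu> \<in> D\<close>] linf_diff[OF that(2,1)]] .
    also have "\<dots> \<le> M" by (rule sup_norm_le) (simp add: abs_minus_commute that(3))
    finally have "\<mu> v - \<mu> u \<le> M" using lin_diff[OF Dl[OF \<open>\<mu> \<in> D\<close>] that(2,1)] by simp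
    then show "I v - M \<le> \<mu> u" using low[OF that(2) \<open>\<mu> \<in> D\<close>] by linarith
  qed
  have wo: "weak_order R" unfolding weak_order_def
  proof (intro conjI ballI impI)
    fix x y assume "x \<in> linf" "y \<in> linf"
    then show "R x y \<or> R y x" using Rce[of x y] Rce[of y x] by linarith
  next
    fix x y z assume xyz: "x \<in> linf" "y \<in> linf" "z \<in> linf" and "R x y \<and> R y z"
    then have "I y \<le> I x" "I z \<le> I y" using Rce by auto
    then show "R x z" using Rce[OF xyz(1,3)] by linarith
  qed
  have mo: "monotonicity R" unfolding monotonicity_def
    using Rce Imono Icsq linf_const_seq by auto
  have co: "continuity R"
    unfolding continuity_def
  proof (intro ballI impI conjI)
    fix x y z assume xyz: "x \<in> linf" "y \<in> linf" "z \<in> linf"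
    define f where "f = (\<lambda>\<alpha>. I (\<lambda>n. \<alpha> * x n + (1 - \<alpha>) * z n))"
    have ml: "(\<lambda>n. \<alpha> * x n + (1 - \<alpha>) * z n) \<in> linf" for \<alpha>
      by (intro linf_add linf_scal xyz)
    obtain M where M: "\<And>n. \<bar>x n - z n\<bar> \<le> M" "M \<ge> 0" using linf_diff[OF xyz(1,3)] linfE by blast
    have "M-lipschitz_on {0..1} f"
    proof (rule lipschitz_onI[OF _ M(2)])
      fix a b :: real
      have d: "\<bar>(a * x n + (1 - a) * z n) - (b * x n + (1 - b) * z n)\<bar> \<le> M * \<bar>a - b\<bar>" for n
      proof -
        have "(a * x n + (1 - a) * z n) - (b * x n + (1 - b) * z n) = (a - b) * (x n - z n)"
          by (simp add: algebra_simps)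
        then show ?thesis using mult_left_mono[OF M(1)[of n], of "\<bar>a - b\<bar>"] by (simp add: abs_mult mult.commute)
      qed
      have d2: "\<bar>(b * x n + (1 - b) * z n) - (a * x n + (1 - a) * z n)\<bar> \<le> M * \<bar>a - b\<bar>" for n
        using d[of n] by (simp add: abs_minus_commute)
      have "f b - M * \<bar>a - b\<bar> \<le> f a" unfolding f_def by (rule Ilip[OF ml ml d])
      moreover have "f a - M * \<bar>a - b\<bar> \<le> f b" unfolding f_def by (rule Ilip[OF ml ml d2])
      ultimately show "dist (f a) (f b) \<le> M * dist a b" by (simp add: dist_real_def abs_le_iff)
    qed
    then have fc: "continuous_on {0..1} f" by (rule lipschitz_on_continuous_on)
    have "{\<alpha>\<in>{0..1}. R (\<lambda>n. \<alpha> * x n + (1 - \<alpha>) * z n) y} = {\<alpha>\<in>{0..1}. I y \<le> f \<alpha>}"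
      using Rce[OF ml xyz(2)] f_def by auto
    then show "closed {\<alpha>\<in>{0..1}. R (\<lambda>n. \<alpha> * x n + (1 - \<alpha>) * z n) y}"
      using closed_ge_cont(1)[OF fc] by simp
    have "{\<alpha>\<in>{0..1}. R y (\<lambda>n. \<alpha> * x n + (1 - \<alpha>) * z n)} = {\<alpha>\<in>{0..1}. f \<alpha> \<le> I y}"
      using Rce[OF xyz(2) ml] f_def by auto
    then show "closed {\<alpha>\<in>{0..1}. R y (\<lambda>n. \<alpha> * x n + (1 - \<alpha>) * z n)}"
      using closed_ge_cont(2)[OF fc] by simp
  qed
  have Ishift: "I (\<lambda>n. x n + \<theta>) = I x + \<theta>" if x: "x \<in> linf" for x \<theta>
  proof -
    have sh: "\<mu> (\<lambda>n. x n + \<theta>) = \<mu> x + \<theta>" if "\<mu> \<in> D" for \<mu>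
      using lin_add[OF Dl[OF that] x linf_const] Delta_const[OF DD[OF that]] by simp
    have xl: "(\<lambda>n. x n + \<theta>) \<in> linf" by (intro linf_add x linf_const)
    have "I x + \<theta> \<le> I (\<lambda>n. x n + \<theta>)"
    proof (rule Ige[OF xl])
      fix \<mu> assume m: "\<mu> \<in> D"
      show "I x + \<theta> \<le> \<mu> (\<lambda>n. x n + \<theta>)" using sh[OF m] low[OF x m] by linarith
    qed
    moreover obtain \<mu> where "\<mu> \<in> D" "I x = \<mu> x" using min[OF x] by blast
    ultimately show ?thesis using low[OF xl \<open>\<mu> \<in> D\<close>] sh[OF \<open>\<mu> \<in> D\<close>] by linarith
  qed
  have icrp: "ICRP R" unfolding ICRP_def
  proof (intro ballI allI impI)
    fix x y \<theta> assume xy: "x \<in> linf" "y \<in> linf" and "R x y"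
    then have "I y \<le> I x" using Rce by blast
    then show "R (\<lambda>n. x n + \<theta>) (\<lambda>n. y n + \<theta>)"
      using Rce[OF linf_add[OF xy(1) linf_const] linf_add[OF xy(2) linf_const]] Ishift[OF xy(1)] Ishift[OF xy(2)]
      by simp
  qed
  have cvx: "convexity R" unfolding convexity_def
  proof (intro ballI allI impI)
    fix x y \<theta> and t :: real assume xy: "x \<in> linf" "y \<in> linf"
      and h: "R x (const_seq \<theta>) \<and> R y (const_seq \<theta>) \<and> 0 \<le> t \<and> t \<le> 1"
    have ml: "(\<lambda>n. t * x n + (1 - t) * y n) \<in> linf" by (intro linf_add linf_scal xy)
    have "\<theta> \<le> I x" "\<theta> \<le> I y" using h Rce xy linf_const_seq Icsq by auto
    have "\<theta> \<le> I (\<lambda>n. t * x n + (1 - t) * y n)"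
    proof (rule Ige[OF ml])
      fix \<mu> assume m: "\<mu> \<in> D"
      have "\<mu> (\<lambda>n. t * x n + (1 - t) * y n) = t * \<mu> x + (1 - t) * \<mu> y"
        using lin_add[OF Dl[OF m] linf_scal[OF xy(1)] linf_scal[OF xy(2)]]
          lin_scal[OF Dl[OF m] xy(1)] lin_scal[OF Dl[OF m] xy(2)] by simp
      moreover have "\<theta> \<le> \<mu> x" "\<theta> \<le> \<mu> y"
        using low[OF xy(1) m] low[OF xy(2) m] \<open>\<theta> \<le> I x\<close> \<open>\<theta> \<le> I y\<close> by auto
      moreover have "t * \<theta> \<le> t * \<mu> x" "(1 - t) * \<theta> \<le> (1 - t) * \<mu> y"
        using h calculation(2,3) by (auto intro: mult_left_mono)
      ultimately show "\<theta> \<le> \<mu> (\<lambda>n. t * x n + (1 - t) * y n)" by (simp add: algebra_simps)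
    qed
    then show "R (\<lambda>n. t * x n + (1 - t) * y n) (const_seq \<theta>)"
      using Rce[OF ml linf_const_seq] Icsq by simp
  qed
  have Iscal: "I (\<lambda>n. a * x n) = a * I x" if x: "x \<in> linf" and a: "a \<ge> 0" for x a
  proof -
    have sc: "\<mu> (\<lambda>n. a * x n) = a * \<mu> x" if "\<mu> \<in> D" for \<mu> using lin_scal[OF Dl[OF that] x] .
    have xl: "(\<lambda>n. a * x n) \<in> linf" by (intro linf_scal x)
    have "a * I x \<le> I (\<lambda>n. a * x n)"
    proof (rule Ige[OF xl])
      fix \<mu> assume m: "\<mu> \<in> D"
      show "a * I x \<le> \<mu> (\<lambda>n. a * x n)" using sc[OF m] mult_left_mono[OF low[OF x m] a] by linarith
    qed
    moreover obtain \<mu> where m: "\<mu> \<in> D" "I x = \<mu> x" using min[OF x] by blast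
    moreover have "I (\<lambda>n. a * x n) \<le> a * I x" using low[OF xl m(1)] sc[OF m(1)] m(2) by simp
    ultimately show ?thesis by linarith
  qed
  have isu: "ISU R" unfolding ISU_def
  proof (intro ballI allI impI)
    fix x y and \<alpha> :: real assume xy: "x \<in> linf" "y \<in> linf" and h: "R x y \<and> 0 \<le> \<alpha>"
    then show "R (\<lambda>n. \<alpha> * x n) (\<lambda>n. \<alpha> * y n)"
      using Rce[OF linf_scal[OF xy(1)] linf_scal[OF xy(2)]] Rce[OF xy] Iscal[OF xy(1)] Iscal[OF xy(2)]
      by (simp add: mult_left_mono)
  qed
  have ifp: "IFPIS R" unfolding IFPIS_def
  proof (intro allI impI ballI)
    fix \<sigma> x d assume \<sigma>: "finite_perm \<sigma>" and xd: "x \<in> linf" "d \<in> linf"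
      and h: "R (\<lambda>n. x n + d n) x"
    define F where "F = {n. \<sigma> n \<noteq> n}"
    have fin: "finite F" using \<sigma> unfolding finite_perm_def F_def by auto
    have l1: "(\<lambda>n. x n + d n) \<in> linf" by (intro linf_add xd)
    have l2: "(\<lambda>n. x n + d (\<sigma> n)) \<in> linf" by (intro linf_add xd linf_comp)
    have eq: "\<mu> (\<lambda>n. x n + d (\<sigma> n)) = \<mu> (\<lambda>n. x n + d n)" if "\<mu> \<in> D" for \<mu>
    proof -
      have "\<mu> (\<lambda>n. (x n + d n) + (d (\<sigma> n) - d n)) = \<mu> (\<lambda>n. x n + d n)"
        by (rule pa_finite_shift[OF Dp[OF that] l1 fin]) (simp add: F_def)
      moreover have "(\<lambda>n. (x n + d n) + (d (\<sigma> n) - d n)) = (\<lambda>n. x n + d (\<sigma> n))" by auto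
      ultimately show ?thesis by simp
    qed
    have "I (\<lambda>n. x n + d n) \<le> I (\<lambda>n. x n + d (\<sigma> n))"
    proof (rule Ige[OF l2])
      fix \<mu> assume m: "\<mu> \<in> D"
      show "I (\<lambda>n. x n + d n) \<le> \<mu> (\<lambda>n. x n + d (\<sigma> n))" using eq[OF m] low[OF l1 m] by linarith
    qed
    moreover have "I (\<lambda>n. x n + d (\<sigma> n)) \<le> I (\<lambda>n. x n + d n)"
    proof (rule Ige[OF l1])
      fix \<mu> assume m: "\<mu> \<in> D"
      show "I (\<lambda>n. x n + d (\<sigma> n)) \<le> \<mu> (\<lambda>n. x n + d n)" using eq[OF m] low[OF l2 m] by linarith
    qed
    ultimately have "I (\<lambda>n. x n + d (\<sigma> n)) = I (\<lambda>n. x n + d n)" by simp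
    then show "R (\<lambda>n. x n + d (\<sigma> n)) x" using h Rce[OF l1 xd(1)] Rce[OF l2 xd(1)] by simp
  qed
  show ?thesis using wo mo co icrp cvx isu ifp by blast
qed


locale prefs =
  fixes R :: "(nat \<Rightarrow> real) \<Rightarrow> (nat \<Rightarrow> real) \<Rightarrow> bool"
  assumes wo: "weak_order R" and mo: "monotonicity R" and co: "continuity R"
    and icrp: "ICRP R" and cvx: "convexity R" and isu: "ISU R" and ifp: "IFPIS R"
begin

lemma R_total: "x \<in> linf \<Longrightarrow> y \<in> linf \<Longrightarrow> R x y \<or> R y x"
  using wo unfolding weak_order_def by blast

lemma R_trans: "x \<in> linf \<Longrightarrow> y \<in> linf \<Longrightarrow> z \<in> linf \<Longrightarrow> R x y \<Longrightarrow> R y z \<Longrightarrow> R x z"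
  using wo unfolding weak_order_def by blast

lemma R_mono: "x \<in> linf \<Longrightarrow> y \<in> linf \<Longrightarrow> (\<And>n. y n \<le> x n) \<Longrightarrow> R x y"
  using mo unfolding monotonicity_def by blast

lemma icrpI: "x \<in> linf \<Longrightarrow> y \<in> linf \<Longrightarrow> R x y \<Longrightarrow> R (\<lambda>n. x n + \<theta>) (\<lambda>n. y n + \<theta>)"
  using icrp unfolding ICRP_def by blast

lemma isuI: "x \<in> linf \<Longrightarrow> y \<in> linf \<Longrightarrow> R x y \<Longrightarrow> \<alpha> \<ge> 0 \<Longrightarrow> R (\<lambda>n. \<alpha> * x n) (\<lambda>n. \<alpha> * y n)"
  using isu unfolding ISU_def by blast

lemma cvxI: "x \<in> linf \<Longrightarrow> y \<in> linf \<Longrightarrow> R x (const_seq \<theta>) \<Longrightarrow> R y (const_seq \<theta>) \<Longrightarrow> 0 \<le> t \<Longrightarrow> t \<le> 1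
   \<Longrightarrow> R (\<lambda>n. t * x n + (1 - t) * y n) (const_seq \<theta>)"
  using cvx unfolding convexity_def by blast

lemma ifpI: "finite_perm \<sigma> \<Longrightarrow> x \<in> linf \<Longrightarrow> d \<in> linf \<Longrightarrow> R (\<lambda>n. x n + d n) x \<Longrightarrow> R (\<lambda>n. x n + d (\<sigma> n)) x"
  using ifp unfolding IFPIS_def by blast

lemma coI: "x \<in> linf \<Longrightarrow> y \<in> linf \<Longrightarrow> z \<in> linf \<Longrightarrow> R x y \<Longrightarrow> R y z \<Longrightarrow>
       closed {\<alpha>\<in>{0..1}. R (\<lambda>n. \<alpha> * x n + (1 - \<alpha>) * z n) y}
     \<and> closed {\<alpha>\<in>{0..1}. R y (\<lambda>n. \<alpha> * x n + (1 - \<alpha>) * z n)}"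
  using co unfolding continuity_def by blast

lemma cs_le: "R (const_seq a) (const_seq b) \<longleftrightarrow> b \<le> a"
proof
  assume "b \<le> a"
  then show "R (const_seq a) (const_seq b)"
    by (intro R_mono linf_const_seq) (simp add: const_seq_def)
next
  assume h: "R (const_seq a) (const_seq b)"
  show "b \<le> a"
  proof (rule ccontr)
    assume "\<not> b \<le> a"
    then have ab: "a < b" by simp
    have "R (\<lambda>n. const_seq a n + - a) (\<lambda>n. const_seq b n + - a)"
      by (rule icrpI[OF linf_const_seq linf_const_seq h])
    then have h2: "R (\<lambda>n. 0) (\<lambda>n. b - a)" by (simp add: const_seq_def)
    have al: "1 / (b - a) \<ge> 0" using ab by simp
    have "R (\<lambda>n. (1 / (b - a)) * 0) (\<lambda>n. (1 / (b - a)) * (b - a))"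
      by (rule isuI[OF linf_const linf_const h2 al])
    then have "R (const_seq 0) (const_seq 1)" using ab by (simp add: const_seq_def)
    then show False using mo unfolding monotonicity_def by simp
  qed
qed

lemma exists_ce:
  assumes x: "x \<in> linf"
  shows "\<exists>c. R x (const_seq c) \<and> R (const_seq c) x"
proof -
  obtain M where M: "\<And>n. \<bar>x n\<bar> \<le> M" "M \<ge> 0" by (metis linfE x)
  define mix where "mix = (\<lambda>\<alpha>::real. (\<lambda>n. \<alpha> * const_seq M n + (1 - \<alpha>) * const_seq (- M) n))"
  have mixc: "mix \<alpha> = const_seq (\<alpha> * M + (1 - \<alpha>) * (- M))" for \<alpha>
    unfolding mix_def const_seq_def by simp
  have r1: "R (const_seq M) x"
  proof (rule R_mono[OF linf_const_seq x])
    fix n show "x n \<le> const_seq M n" using M(1)[of n] by (simp add: const_seq_def abs_le_iff)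
  qed
  have r2: "R x (const_seq (- M))"
  proof (rule R_mono[OF x linf_const_seq])
    fix n have "- x n \<le> M" using M(1)[of n] by (simp add: abs_le_iff)
    then show "const_seq (- M) n \<le> x n" by (simp add: const_seq_def)
  qed
  define S1 where "S1 = {\<alpha>\<in>{0..1}. R (mix \<alpha>) x}"
  define S2 where "S2 = {\<alpha>\<in>{0..1}. R x (mix \<alpha>)}"
  have cl: "closed S1" "closed S2"
    using coI[OF linf_const_seq x linf_const_seq r1 r2] unfolding S1_def S2_def mix_def by auto
  have cover: "{0..1} \<subseteq> S1 \<union> S2"
    using R_total[OF _ x] linf_const_seq unfolding S1_def S2_def mixc by auto
  have "1 \<in> S1" using r1 unfolding S1_def mixc by simp
  moreover have "0 \<in> S2" using r2 unfolding S2_def mixc by simp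
  ultimately have "S1 \<inter> S2 \<inter> {0..1} \<noteq> {}"
  proof (intro notI)
    assume e: "S1 \<inter> S2 \<inter> {0..1} = {}" and a1: "1 \<in> S1" and a0: "0 \<in> S2"
    have conn: "\<not> (\<exists>A B. closed A \<and> closed B \<and> {0::real..1} \<subseteq> A \<union> B \<and> A \<inter> B \<inter> {0..1} = {}
        \<and> A \<inter> {0..1} \<noteq> {} \<and> B \<inter> {0..1} \<noteq> {})"
      using connected_Icc[of "0::real" 1] unfolding connected_closed .
    have "S1 \<inter> {0..1} \<noteq> {}" using a1 by auto
    moreover have "S2 \<inter> {0..1} \<noteq> {}" using a0 by auto
    ultimately show False using conn cl cover e by blast
  qed
  then obtain \<alpha> where "\<alpha> \<in> S1" "\<alpha> \<in> S2" by blast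
  then show ?thesis unfolding S1_def S2_def mixc by auto
qed

definition I :: "(nat \<Rightarrow> real) \<Rightarrow> real" where
  "I x = (SOME c. R x (const_seq c) \<and> R (const_seq c) x)"

lemma I_ce: "x \<in> linf \<Longrightarrow> R x (const_seq (I x)) \<and> R (const_seq (I x)) x"
  unfolding I_def by (rule someI_ex) (rule exists_ce)

lemma I_cs: "I (const_seq c) = c"
  using I_ce[OF linf_const_seq, of c] cs_le by (meson order_antisym)

lemma I_cs': "I (\<lambda>n. c) = c"
  using I_cs[of c] by (simp add: const_seq_def)

lemma Rce: "x \<in> linf \<Longrightarrow> y \<in> linf \<Longrightarrow> R x y \<longleftrightarrow> I y \<le> I x"
proof -
  assume xy: "x \<in> linf" "y \<in> linf"
  note cx = I_ce[OF xy(1)] and cy = I_ce[OF xy(2)]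
  show ?thesis
  proof
    assume "R x y"
    have "R (const_seq (I x)) y" using R_trans[OF linf_const_seq xy(1) xy(2)] cx \<open>R x y\<close> by simp
    then have "R (const_seq (I x)) (const_seq (I y))"
      using R_trans[OF linf_const_seq xy(2) linf_const_seq] cy by simp
    then show "I y \<le> I x" using cs_le by simp
  next
    assume "I y \<le> I x"
    then have "R (const_seq (I x)) (const_seq (I y))" using cs_le by simp
    then have "R x (const_seq (I y))"
      using R_trans[OF xy(1) linf_const_seq linf_const_seq, of "I x" "I y"] cx by blast
    then show "R x y" using R_trans[OF xy(1) linf_const_seq xy(2), of "I y"] cy by blast
  qed
qed

lemma I_unique: "z \<in> linf \<Longrightarrow> R z (const_seq c) \<Longrightarrow> R (const_seq c) z \<Longrightarrow> I z = c"
  using Rce[OF _ linf_const_seq, of z c] Rce[OF linf_const_seq, of z c] I_cs by auto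

lemma ce_I: "constant_equivalent R I"
  unfolding constant_equivalent_def using I_ce Rce by blast

lemma ce_unique: assumes ce: "constant_equivalent R J" and x: "x \<in> linf" shows "J x = I x"
proof -
  have "R x (const_seq (J x)) \<and> R (const_seq (J x)) x" using ce x unfolding constant_equivalent_def by blast
  then have "I x = J x" using I_unique[OF x, of "J x"] by blast
  then show ?thesis by simp
qed

lemma I_mono: "x \<in> linf \<Longrightarrow> y \<in> linf \<Longrightarrow> (\<And>n. y n \<le> x n) \<Longrightarrow> I y \<le> I x"
  using R_mono Rce by blast

lemma I_shift: assumes x: "x \<in> linf" shows "I (\<lambda>n. x n + \<theta>) = I x + \<theta>"
proof -
  have xl: "(\<lambda>n. x n + \<theta>) \<in> linf" by (intro linf_add x linf_const)
  have "R (\<lambda>n. x n + \<theta>) (\<lambda>n. const_seq (I x) n + \<theta>)" "R (\<lambda>n. const_seq (I x) n + \<theta>) (\<lambda>n. x n + \<theta>)"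
    using icrpI[OF x linf_const_seq] icrpI[OF linf_const_seq x] I_ce[OF x] by auto
  moreover have "(\<lambda>n. const_seq (I x) n + \<theta>) = const_seq (I x + \<theta>)" by (simp add: const_seq_def)
  ultimately show ?thesis using I_unique[OF xl] by simp
qed

lemma I_scal: assumes x: "x \<in> linf" and a: "a \<ge> 0" shows "I (\<lambda>n. a * x n) = a * I x"
proof -
  have xl: "(\<lambda>n. a * x n) \<in> linf" by (intro linf_scal x)
  have "R (\<lambda>n. a * x n) (\<lambda>n. a * const_seq (I x) n)" "R (\<lambda>n. a * const_seq (I x) n) (\<lambda>n. a * x n)"
    using isuI[OF x linf_const_seq _ a] isuI[OF linf_const_seq x _ a] I_ce[OF x] by auto
  moreover have "(\<lambda>n. a * const_seq (I x) n) = const_seq (a * I x)" by (simp add: const_seq_def)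
  ultimately show ?thesis using I_unique[OF xl] by simp
qed

lemma I_zero: "I (\<lambda>n. 0) = 0" using I_cs'[of 0] .

lemma I_superadd:
  assumes x: "x \<in> linf" and y: "y \<in> linf"
  shows "I x + I y \<le> I (\<lambda>n. x n + y n)"
proof -
  define u where "u = (\<lambda>n. x n + - I x)"
  define v where "v = (\<lambda>n. y n + - I y)"
  have ul: "u \<in> linf" "v \<in> linf" unfolding u_def v_def by (intro linf_add x y linf_const)+
  have "I u = 0" "I v = 0" unfolding u_def v_def using I_shift[OF x, of "- I x"] I_shift[OF y, of "- I y"] by simp_all
  then have "R u (const_seq 0)" "R v (const_seq 0)" using Rce[OF _ linf_const_seq] ul I_cs by auto
  then have "R (\<lambda>n. (1/2) * u n + (1 - 1/2) * v n) (const_seq 0)"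
    by (intro cvxI ul) auto
  moreover have ml: "(\<lambda>n. (1/2) * u n + (1 - 1/2) * v n) \<in> linf" by (intro linf_add linf_scal ul)
  ultimately have h: "0 \<le> I (\<lambda>n. (1/2) * u n + (1 - 1/2) * v n)"
    using Rce[OF ml linf_const_seq] I_cs by simp
  have xyl: "(\<lambda>n. x n + y n) \<in> linf" by (intro linf_add x y)
  have eq: "(\<lambda>n. (1/2) * u n + (1 - 1/2) * v n) = (\<lambda>n. (1/2) * (x n + y n) + - ((I x + I y) / 2))"
    unfolding u_def v_def by (auto simp: algebra_simps)
  have e1: "I (\<lambda>n. (1/2) * (x n + y n) + - ((I x + I y) / 2)) = I (\<lambda>n. (1/2) * (x n + y n)) + - ((I x + I y) / 2)"
    by (rule I_shift[OF linf_scal[OF xyl]])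
  have e2: "I (\<lambda>n. (1/2) * (x n + y n)) = (1/2) * I (\<lambda>n. x n + y n)"
    by (rule I_scal[OF xyl]) simp
  have "0 \<le> (1/2) * I (\<lambda>n. x n + y n) + - ((I x + I y) / 2)"
    using h unfolding eq e1 e2 .
  then show ?thesis by simp
qed

lemma I_ge_norm: assumes x: "x \<in> linf" shows "- sup_norm x \<le> I x"
proof -
  have "I (\<lambda>n. - sup_norm x) \<le> I x"
  proof (rule I_mono[OF x linf_const])
    fix n show "- sup_norm x \<le> x n" using sup_norm_ge[OF x, of n] by (auto simp: abs_le_iff)
  qed
  then show ?thesis using I_cs' by simp
qed

lemma I_le_norm: assumes x: "x \<in> linf" shows "I x \<le> sup_norm x"
proof -
  have "I x \<le> I (\<lambda>n. sup_norm x)"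
  proof (rule I_mono[OF linf_const x])
    fix n show "x n \<le> sup_norm x" using sup_norm_ge[OF x, of n] by (auto simp: abs_le_iff)
  qed
  then show ?thesis using I_cs' by simp
qed

lemma I_perm_ge:
  assumes \<sigma>: "finite_perm \<sigma>" and x: "x \<in> linf" and d: "d \<in> linf"
  shows "I (\<lambda>n. x n + d n) \<le> I (\<lambda>n. x n + d (\<sigma> n))"
proof -
  define c where "c = I (\<lambda>n. x n + d n) - I x"
  define d' where "d' = (\<lambda>n. d n + - c)"
  have d'l: "d' \<in> linf" unfolding d'_def by (intro linf_add d linf_const)
  have xdl: "(\<lambda>n. x n + d n) \<in> linf" by (intro linf_add x d)
  have e1: "(\<lambda>n. x n + d' n) = (\<lambda>n. (x n + d n) + - c)" unfolding d'_def by (simp add: algebra_simps)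
  have "I (\<lambda>n. x n + d' n) = I x" unfolding e1 I_shift[OF xdl] c_def by simp
  then have "R (\<lambda>n. x n + d' n) x" using Rce[OF linf_add[OF x d'l] x] by simp
  then have "R (\<lambda>n. x n + d' (\<sigma> n)) x" by (rule ifpI[OF \<sigma> x d'l])
  moreover have e2: "(\<lambda>n. x n + d' (\<sigma> n)) = (\<lambda>n. (x n + d (\<sigma> n)) + - c)" unfolding d'_def by (simp add: algebra_simps)
  moreover have xdsl: "(\<lambda>n. x n + d (\<sigma> n)) \<in> linf" by (rule linf_add[OF x linf_comp[OF d]])
  ultimately have r: "R (\<lambda>n. (x n + d (\<sigma> n)) + - c) x" by simp
  have "I x \<le> I (\<lambda>n. (x n + d (\<sigma> n)) + - c)"
    using r Rce[OF linf_add[OF xdsl linf_const[of "- c"]] x] by blast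
  then have "I x \<le> I (\<lambda>n. x n + d (\<sigma> n)) - c"
    using I_shift[OF xdsl, of "- c"] by linarith
  then show ?thesis unfolding c_def by simp
qed

definition swp :: "nat \<Rightarrow> nat \<Rightarrow> nat \<Rightarrow> nat" where
  "swp a b m = (if m = a then b else if m = b then a else m)"

lemma swp_fp: "finite_perm (swp a b)"
proof -
  have inv: "swp a b (swp a b m) = m" for m unfolding swp_def by auto
  have "bij (swp a b)" by (rule o_bij[of "swp a b"]) (auto simp: inv fun_eq_iff)
  moreover have "{n. swp a b n \<noteq> n} \<subseteq> {a, b}" unfolding swp_def by auto
  ultimately show ?thesis unfolding finite_perm_def using finite_subset by blast
qed

lemma I_transfer:
  assumes z: "z \<in> linf"
  shows "I (\<lambda>m. z m + t * indicator {a} m) = I (\<lambda>m. z m + t * indicator {b} m)"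
proof -
  have dl: "(\<lambda>m. t * indicator {c} m) \<in> linf" for c :: nat by (intro linf_scal linf_indicator)
  have e: "(\<lambda>n. z n + t * indicator {b} (swp a b n)) = (\<lambda>m. z m + t * indicator {a} m)"
    unfolding swp_def by (auto simp: indicator_def fun_eq_iff)
  have e2: "(\<lambda>n. z n + t * indicator {a} (swp b a n)) = (\<lambda>m. z m + t * indicator {b} m)"
    unfolding swp_def by (auto simp: indicator_def fun_eq_iff)
  have p1: "I (\<lambda>n. z n + t * indicator {b} n) \<le> I (\<lambda>n. z n + t * indicator {b} (swp a b n))"
    by (rule I_perm_ge[OF swp_fp z dl])
  have p2: "I (\<lambda>n. z n + t * indicator {a} n) \<le> I (\<lambda>n. z n + t * indicator {a} (swp b a n))"
    by (rule I_perm_ge[OF swp_fp z dl])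
  show ?thesis using p1 p2 unfolding e e2 by linarith
qed

lemma I_pa_aux:
  "I (\<lambda>m. - (s * indicator {n} m) - indicator {n<..n + r} m) = I (\<lambda>m. - ((s + real r) * indicator {n} m))"
proof (induction r arbitrary: s)
  case 0
  then show ?case by simp
next
  case (Suc r)
  define z where "z = (\<lambda>m. - (s * indicator {n} m) - indicator {n<..n + r} m)"
  have zl: "z \<in> linf" unfolding z_def by (intro linf_diff linf_neg linf_scal linf_indicator)
  have e1: "(\<lambda>m. - (s * indicator {n} m) - indicator {n<..n + Suc r} m) =
      (\<lambda>m. z m + (-1) * indicator {Suc (n + r)} m)"
    unfolding z_def by (auto simp: indicator_def fun_eq_iff)
  have e2: "(\<lambda>m. z m + (-1) * indicator {n} m) = (\<lambda>m. - ((s + 1) * indicator {n} m) - indicator {n<..n + r} m)"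
    unfolding z_def by (auto simp: indicator_def fun_eq_iff)
  show ?case
    unfolding e1 I_transfer[OF zl, of "-1" "Suc (n + r)" n] e2 Suc.IH
    by (simp add: algebra_simps)
qed

lemma I_neg_ind: "0 \<le> I (\<lambda>m. - indicator {n} m)"
proof (rule ccontr)
  define c where "c = I (\<lambda>m. - indicator {n} m)"
  assume "\<not> 0 \<le> I (\<lambda>m. - indicator {n} m)"
  then have cn: "c < 0" unfolding c_def by simp
  have bnd: "- 1 \<le> real (Suc r) * c" for r
  proof -
    have "I (\<lambda>m. - ((1 + real r) * indicator {n} m)) = (1 + real r) * c"
      using I_scal[OF linf_neg[OF linf_indicator], of "1 + real r" "{n}"] unfolding c_def by simp
    moreover have "-1 \<le> I (\<lambda>m. - (1 * indicator {n} m) - indicator {n<..n + r} m)"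
    proof -
      have fl: "(\<lambda>m. - (1 * indicator {n} m) - indicator {n<..n + r} m) \<in> linf"
        by (intro linf_diff linf_neg linf_scal linf_indicator)
      have "I (\<lambda>m. -1) \<le> I (\<lambda>m. - (1 * indicator {n} m) - indicator {n<..n + r} m)"
        by (rule I_mono[OF fl linf_const]) (auto simp: indicator_def)
      then show ?thesis using I_cs' by simp
    qed
    ultimately show ?thesis using I_pa_aux[of 1 n r] by simp
  qed
  obtain r :: nat where r: "real r > 1 / (- c)" using reals_Archimedean2 by blast
  have cp: "- c > 0" using cn by simp
  have "1 < real r * (- c)" using iffD1[OF pos_divide_less_eq[OF cp] r] .
  moreover have "real (Suc r) * c = real r * c + c" by (simp add: algebra_simps)
  ultimately have "real (Suc r) * c < -1" using cn by simp
  then show False using bnd[of r] by simp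
qed

end


definition sublin :: "((nat \<Rightarrow> real) \<Rightarrow> real) \<Rightarrow> bool" where
  "sublin q \<longleftrightarrow> (\<forall>x\<in>linf. \<forall>y\<in>linf. q (\<lambda>n. x n + y n) \<le> q x + q y)
     \<and> (\<forall>c\<ge>0. \<forall>x\<in>linf. q (\<lambda>n. c * x n) = c * q x)"

lemma sublin_add: "sublin q \<Longrightarrow> x \<in> linf \<Longrightarrow> y \<in> linf \<Longrightarrow> q (\<lambda>n. x n + y n) \<le> q x + q y"
  unfolding sublin_def by blast

lemma sublin_scal: "sublin q \<Longrightarrow> x \<in> linf \<Longrightarrow> c \<ge> 0 \<Longrightarrow> q (\<lambda>n. c * x n) = c * q x"
  unfolding sublin_def by blast

lemma sublin_zero: "sublin q \<Longrightarrow> q (\<lambda>n. 0) = 0"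
  using sublin_scal[of q "\<lambda>n. 0" 0] linf_const[of 0] by simp

lemma sublin_low: "sublin q \<Longrightarrow> x \<in> linf \<Longrightarrow> - q (\<lambda>n. - x n) \<le> q x"
  using sublin_add[of q x "\<lambda>n. - x n"] sublin_zero[of q] linf_neg[of x] by simp

lemma INF_add_ge:
  fixes f g :: "'a \<Rightarrow> real"
  assumes "A \<noteq> {}" "B \<noteq> {}" "bdd_below (f ` A)" "bdd_below (g ` B)"
    and h: "\<And>a b. a \<in> A \<Longrightarrow> b \<in> B \<Longrightarrow> c \<le> f a + g b"
  shows "c \<le> (INF a\<in>A. f a) + (INF b\<in>B. g b)"
proof -
  have "c - g b \<le> (INF a\<in>A. f a)" if "b \<in> B" for b
    by (rule cINF_greatest[OF assms(1)]) (use h that in force)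
  then have "c - (INF a\<in>A. f a) \<le> (INF b\<in>B. g b)"
    by (intro cINF_greatest[OF assms(2)]) force
  then show ?thesis by simp
qed

lemma INF_scale:
  fixes f :: "'a \<Rightarrow> real"
  assumes c: "c \<ge> 0" and A: "A \<noteq> {}" and b: "bdd_below (f ` A)"
  shows "(INF a\<in>A. c * f a) = c * (INF a\<in>A. f a)"
proof (cases "c = 0")
  case True
  then show ?thesis using A by simp
next
  case False
  then have cp: "c > 0" using c by simp
  have le1: "c * (INF a\<in>A. f a) \<le> (INF a\<in>A. c * f a)"
    by (rule cINF_greatest[OF A]) (use cINF_lower[OF b] cp in simp)
  have "(INF a\<in>A. c * f a) / c \<le> (INF a\<in>A. f a)"
  proof (rule cINF_greatest[OF A])
    fix a assume "a \<in> A"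
    obtain M where M: "\<forall>x\<in>A. M \<le> f x" using b unfolding bdd_below_def by auto
    have bb: "bdd_below ((\<lambda>a. c * f a) ` A)"
      by (rule bdd_belowI2[of A "c * M"]) (use M cp in \<open>simp add: mult_left_mono\<close>)
    have "(INF a\<in>A. c * f a) \<le> c * f a" by (rule cINF_lower[OF bb \<open>a \<in> A\<close>])
    then show "(INF a\<in>A. c * f a) / c \<le> f a" using cp by (simp add: divide_le_eq mult.commute)
  qed
  then have "(INF a\<in>A. c * f a) \<le> c * (INF a\<in>A. f a)" using cp by (simp add: divide_le_eq mult.commute)
  then show ?thesis using le1 by simp
qed

definition tilt :: "((nat \<Rightarrow> real) \<Rightarrow> real) \<Rightarrow> (nat \<Rightarrow> real) \<Rightarrow> (nat \<Rightarrow> real) \<Rightarrow> real" where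
  "tilt q y x = (if x \<in> linf then (INF t\<in>{0..}. q (\<lambda>n. x n + t * y n) - t * q y) else 0)"

context
  fixes q y
  assumes q: "sublin q" and y: "y \<in> linf"
begin

lemma tilt_term_low:
  assumes x: "x \<in> linf" and t: "t \<ge> 0"
  shows "- q (\<lambda>n. - x n) \<le> q (\<lambda>n. x n + t * y n) - t * q y"
proof -
  have xt: "(\<lambda>n. x n + t * y n) \<in> linf" by (intro linf_add linf_scal x y)
  have "(\<lambda>n. t * y n) = (\<lambda>n. (x n + t * y n) + - x n)" by simp
  then have "q (\<lambda>n. t * y n) \<le> q (\<lambda>n. x n + t * y n) + q (\<lambda>n. - x n)"
    using sublin_add[OF q xt linf_neg[OF x]] by simp
  then show ?thesis using sublin_scal[OF q y t] by simp
qed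

lemma tilt_bdd: "x \<in> linf \<Longrightarrow> bdd_below ((\<lambda>t. q (\<lambda>n. x n + t * y n) - t * q y) ` {0..})"
  unfolding bdd_below_def using tilt_term_low by auto

lemma tilt_le: "x \<in> linf \<Longrightarrow> t \<ge> 0 \<Longrightarrow> tilt q y x \<le> q (\<lambda>n. x n + t * y n) - t * q y"
  unfolding tilt_def using cINF_lower[OF tilt_bdd] by simp

lemma tilt_ge: "x \<in> linf \<Longrightarrow> - q (\<lambda>n. - x n) \<le> tilt q y x"
  unfolding tilt_def by (simp, rule cINF_greatest) (use tilt_term_low in auto)

lemma tilt_le_self: "x \<in> linf \<Longrightarrow> tilt q y x \<le> q x"
  using tilt_le[of x 0] by simp

lemma tilt_neg: "tilt q y (\<lambda>n. - y n) \<le> - q y"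
  using tilt_le[OF linf_neg[OF y], of 1] sublin_zero[OF q] by simp

lemma tilt_sublin: "sublin (tilt q y)"
  unfolding sublin_def
proof (intro conjI ballI allI impI)
  fix x1 x2 assume x: "x1 \<in> linf" "x2 \<in> linf"
  have xl: "(\<lambda>n. x1 n + x2 n) \<in> linf" by (intro linf_add x)
  have "tilt q y (\<lambda>n. x1 n + x2 n) \<le>
     (INF t\<in>{0..}. q (\<lambda>n. x1 n + t * y n) - t * q y) + (INF t\<in>{0..}. q (\<lambda>n. x2 n + t * y n) - t * q y)"
  proof (rule INF_add_ge)
    fix a b :: real assume ab: "a \<in> {0..}" "b \<in> {0..}"
    have "tilt q y (\<lambda>n. x1 n + x2 n) \<le> q (\<lambda>n. (x1 n + x2 n) + (a + b) * y n) - (a + b) * q y"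
      using tilt_le[OF xl] ab by simp
    also have "(\<lambda>n. (x1 n + x2 n) + (a + b) * y n) = (\<lambda>n. (x1 n + a * y n) + (x2 n + b * y n))"
      by (simp add: algebra_simps)
    also have "q \<dots> \<le> q (\<lambda>n. x1 n + a * y n) + q (\<lambda>n. x2 n + b * y n)"
      by (intro sublin_add[OF q] linf_add linf_scal x y)
    finally show "tilt q y (\<lambda>n. x1 n + x2 n) \<le> (q (\<lambda>n. x1 n + a * y n) - a * q y) + (q (\<lambda>n. x2 n + b * y n) - b * q y)"
      by (simp add: algebra_simps)
  qed (use tilt_bdd x in auto)
  then show "tilt q y (\<lambda>n. x1 n + x2 n) \<le> tilt q y x1 + tilt q y x2" unfolding tilt_def using x by simp
next
  fix c :: real and x assume c: "0 \<le> c" and x: "x \<in> linf"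
  have cxl: "(\<lambda>n. c * x n) \<in> linf" by (intro linf_scal x)
  show "tilt q y (\<lambda>n. c * x n) = c * tilt q y x"
  proof (cases "c = 0")
    case True
    have "q (\<lambda>n. 0 + t * y n) - t * q y = 0" if "t \<ge> 0" for t using sublin_scal[OF q y that] by simp
    then have "tilt q y (\<lambda>n. 0) = 0" unfolding tilt_def using linf_const[of 0] by simp
    then show ?thesis using True by simp
  next
    case False
    then have cp: "c > 0" using c by simp
    have eq: "q (\<lambda>n. c * x n + (c * s) * y n) = c * q (\<lambda>n. x n + s * y n)" if "s \<ge> 0" for s
    proof -
      have "(\<lambda>n. c * x n + (c * s) * y n) = (\<lambda>n. c * (x n + s * y n))" by (simp add: algebra_simps)
      then show ?thesis using sublin_scal[OF q linf_add[OF x linf_scal[OF y]] c] by simp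
    qed
    have "tilt q y (\<lambda>n. c * x n) / c \<le> tilt q y x"
      unfolding tilt_def[of q y x] using x
    proof (simp, intro cINF_greatest)
      fix s :: real assume s: "s \<in> {0..}"
      have "tilt q y (\<lambda>n. c * x n) \<le> q (\<lambda>n. c * x n + (c * s) * y n) - (c * s) * q y"
        using tilt_le[OF cxl] s cp by simp
      also have "\<dots> = c * q (\<lambda>n. x n + s * y n) - (c * s) * q y" using eq s by simp
      also have "\<dots> = c * (q (\<lambda>n. x n + s * y n) - s * q y)" by (simp add: algebra_simps)
      finally show "tilt q y (\<lambda>n. c * x n) / c \<le> q (\<lambda>n. x n + s * y n) - s * q y"
        using cp by (simp add: divide_le_eq mult.commute)
    qed simp
    then have le1: "tilt q y (\<lambda>n. c * x n) \<le> c * tilt q y x" using cp by (simp add: divide_le_eq mult.commute)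
    have "c * tilt q y x \<le> tilt q y (\<lambda>n. c * x n)"
      unfolding tilt_def[of q y "\<lambda>n. c * x n"] using cxl
    proof (simp, intro cINF_greatest)
      fix t :: real assume t: "t \<in> {0..}"
      then have ts: "t / c \<ge> 0" using cp by simp
      have "c * tilt q y x \<le> c * (q (\<lambda>n. x n + (t / c) * y n) - (t / c) * q y)"
        using tilt_le[OF x ts] cp by simp
      also have "\<dots> = c * q (\<lambda>n. x n + (t / c) * y n) - c * ((t / c) * q y)"
        by (simp only: right_diff_distrib)
      also have "\<dots> = q (\<lambda>n. c * x n + (c * (t / c)) * y n) - c * ((t / c) * q y)"
        using eq[OF ts] by simp
      also have "\<dots> = q (\<lambda>n. c * x n + t * y n) - t * q y" using cp by simp
      finally show "c * tilt q y x \<le> q (\<lambda>n. c * x n + t * y n) - t * q y" .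
    qed simp
    then show ?thesis using le1 by simp
  qed
qed

end

lemma hahn_banach:
  assumes p: "sublin p" and x0: "x0 \<in> linf"
  shows "\<exists>\<mu>. lin \<mu> \<and> (\<forall>x\<in>linf. \<mu> x \<le> p x) \<and> \<mu> x0 = - p (\<lambda>n. - x0 n) \<and> (\<forall>x. x \<notin> linf \<longrightarrow> \<mu> x = 0)"
proof -
  define A where "A = {q. sublin q \<and> (\<forall>x\<in>linf. q x \<le> p x) \<and> q x0 \<le> - p (\<lambda>n. - x0 n)
       \<and> (\<forall>x. x \<notin> linf \<longrightarrow> q x = 0)}"
  define P where "P = (\<lambda>q1 q2 :: (nat \<Rightarrow> real) \<Rightarrow> real. \<forall>x. q2 x \<le> q1 x)"
  have mx0: "(\<lambda>n. - x0 n) \<in> linf" by (rule linf_neg[OF x0])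
  define q0 where "q0 = tilt p (\<lambda>n. - x0 n)"
  have q0A: "q0 \<in> A"
    unfolding A_def q0_def
    using tilt_sublin[OF p mx0] tilt_le_self[OF p mx0] tilt_neg[OF p mx0] by (simp add: tilt_def)
  have po: "partial_order_on A (relation_of P A)"
    by (rule partial_order_on_relation_ofI) (auto simp: P_def intro: order_trans intro!: ext antisym)
  have lowA: "- p (\<lambda>n. - x n) \<le> q x" if "q \<in> A" "x \<in> linf" for q x
  proof -
    have sq: "sublin q" using that(1) unfolding A_def by simp
    have "- q (\<lambda>n. - x n) \<le> q x" using sublin_low[OF sq that(2)] .
    moreover have "q (\<lambda>n. - x n) \<le> p (\<lambda>n. - x n)" using that(1) linf_neg[OF that(2)] unfolding A_def by auto
    ultimately show ?thesis by linarith
  qed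
  have "\<exists>m\<in>A. \<forall>a\<in>A. P m a \<longrightarrow> a = m"
  proof (rule predicate_Zorn[OF po])
    fix C assume C: "C \<in> Chains (relation_of P A)"
    have CA: "C \<subseteq> A" using Chains_relation_of[OF C] .
    have comp: "P a b \<or> P b a" if "a \<in> C" "b \<in> C" for a b
      using C that unfolding Chains_def relation_of_def by auto
    show "\<exists>u\<in>A. \<forall>a\<in>C. P a u"
    proof (cases "C = {}")
      case True
      then show ?thesis using q0A by blast
    next
      case False
      define u where "u = (\<lambda>x. if x \<in> linf then (INF q\<in>C. q x) else 0)"
      have bdd: "bdd_below ((\<lambda>q. q x) ` C)" if "x \<in> linf" for x
        by (rule bdd_belowI2[of C "- p (\<lambda>n. - x n)"]) (use lowA CA that in auto)
      have ule: "u x \<le> a x" if "a \<in> C" for a x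
      proof (cases "x \<in> linf")
        case True
        then show ?thesis unfolding u_def using cINF_lower[OF bdd that] by simp
      next
        case False
        then show ?thesis unfolding u_def using that CA A_def by auto
      qed
      have "sublin u" unfolding sublin_def
      proof (intro conjI ballI allI impI)
        fix x y assume xy: "x \<in> linf" "y \<in> linf"
        have xyl: "(\<lambda>n. x n + y n) \<in> linf" by (intro linf_add xy)
        have "u (\<lambda>n. x n + y n) \<le> (INF q\<in>C. q x) + (INF q\<in>C. q y)"
        proof (rule INF_add_ge[OF False False bdd[OF xy(1)] bdd[OF xy(2)]])
          fix a b assume ab: "a \<in> C" "b \<in> C"
          have sa: "sublin a" "sublin b" using ab CA unfolding A_def by auto
          show "u (\<lambda>n. x n + y n) \<le> a x + b y"
          proof (cases "P a b")
            case True
            then have "b x \<le> a x" unfolding P_def by blast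
            moreover have "u (\<lambda>n. x n + y n) \<le> b x + b y"
              using ule[OF ab(2), of "\<lambda>n. x n + y n"] sublin_add[OF sa(2) xy] by linarith
            ultimately show ?thesis by linarith
          next
            case False
            then have "P b a" using comp ab by blast
            then have "a y \<le> b y" unfolding P_def by blast
            moreover have "u (\<lambda>n. x n + y n) \<le> a x + a y"
              using ule[OF ab(1), of "\<lambda>n. x n + y n"] sublin_add[OF sa(1) xy] by linarith
            ultimately show ?thesis by linarith
          qed
        qed
        then show "u (\<lambda>n. x n + y n) \<le> u x + u y" unfolding u_def using xy xyl by simp
      next
        fix c :: real and x assume c: "0 \<le> c" and x: "x \<in> linf"
        have cxl: "(\<lambda>n. c * x n) \<in> linf" by (intro linf_scal x)
        have "(INF q\<in>C. q (\<lambda>n. c * x n)) = (INF q\<in>C. c * q x)"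
          by (rule INF_cong) (use CA c x in \<open>auto simp: A_def intro: sublin_scal\<close>)
        also have "\<dots> = c * (INF q\<in>C. q x)" by (rule INF_scale[OF c False bdd[OF x]])
        finally show "u (\<lambda>n. c * x n) = c * u x" unfolding u_def using x cxl by simp
      qed
      moreover obtain a where a: "a \<in> C" using False by blast
      moreover have "\<forall>x\<in>linf. u x \<le> p x"
      proof
        fix x assume x: "x \<in> linf"
        have "a x \<le> p x" using CA a x unfolding A_def by auto
        then show "u x \<le> p x" using ule[OF a, of x] by linarith
      qed
      moreover have "u x0 \<le> - p (\<lambda>n. - x0 n)" using ule[OF a, of x0] a CA unfolding A_def by force
      ultimately have "u \<in> A" unfolding A_def u_def by auto
      then show ?thesis using ule unfolding P_def by auto
    qed
  qed
  then obtain m where mA: "m \<in> A" and mmin: "\<And>a. a \<in> A \<Longrightarrow> P m a \<Longrightarrow> a = m" by blast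
  have ms: "sublin m" using mA unfolding A_def by blast
  have super: "m x + m y \<le> m (\<lambda>n. x n + y n)" if xy: "x \<in> linf" "y \<in> linf" for x y
  proof -
    have tA: "tilt m y \<in> A"
      using mA tilt_sublin[OF ms xy(2)] tilt_le_self[OF ms xy(2)] x0 unfolding A_def
      by (auto simp: tilt_def intro: order_trans)
    have "P m (tilt m y)" unfolding P_def
    proof
      fix z show "tilt m y z \<le> m z"
        using tilt_le_self[OF ms xy(2)] mA unfolding A_def tilt_def by (cases "z \<in> linf") auto
    qed
    then have "tilt m y = m" using mmin[OF tA] by simp
    then have "m x \<le> m (\<lambda>n. x n + 1 * y n) - 1 * m y" using tilt_le[OF ms xy(2) xy(1), of 1] by simp
    then show ?thesis by simp
  qed
  have madd: "m (\<lambda>n. x n + y n) = m x + m y" if "x \<in> linf" "y \<in> linf" for x y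
    using super[OF that] sublin_add[OF ms that] by simp
  have mneg: "m (\<lambda>n. - x n) = - m x" if x: "x \<in> linf" for x
    using madd[OF x linf_neg[OF x]] sublin_zero[OF ms] by simp
  have mlin: "lin m" unfolding lin_def
  proof (intro conjI ballI allI)
    fix x y assume "x \<in> linf" "y \<in> linf" then show "m (\<lambda>n. x n + y n) = m x + m y" by (rule madd)
  next
    fix c :: real and x assume x: "x \<in> linf"
    show "m (\<lambda>n. c * x n) = c * m x"
    proof (cases "c \<ge> 0")
      case True then show ?thesis using sublin_scal[OF ms x] by simp
    next
      case False
      have "(\<lambda>n. c * x n) = (\<lambda>n. - ((- c) * x n))" by simp
      then have "m (\<lambda>n. c * x n) = - m (\<lambda>n. (- c) * x n)" using mneg[OF linf_scal[OF x]] by simp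
      then show ?thesis using sublin_scal[OF ms x, of "- c"] False by simp
    qed
  qed
  have mp: "\<forall>x\<in>linf. m x \<le> p x" using mA unfolding A_def by blast
  have "m x0 \<le> - p (\<lambda>n. - x0 n)" using mA unfolding A_def by blast
  moreover have "- p (\<lambda>n. - x0 n) \<le> m x0" using mp mx0 mneg[OF x0] by force
  ultimately show ?thesis using mlin mp mA unfolding A_def by (intro exI[of _ m]) auto
qed


lemma closed_ball_all:
  fixes Q :: "((nat \<Rightarrow> real) \<Rightarrow> real) \<Rightarrow> 'b \<Rightarrow> bool"
  assumes "\<And>x. x \<in> S \<Longrightarrow> closed {\<mu>. Q \<mu> x}"
  shows "closed {\<mu>. \<forall>x\<in>S. Q \<mu> x}"
proof -
  have "{\<mu>. \<forall>x\<in>S. Q \<mu> x} = (\<Inter>x\<in>S. {\<mu>. Q \<mu> x})" by auto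
  then show ?thesis using closed_INT[of S "\<lambda>x. {\<mu>. Q \<mu> x}"] assms by simp
qed

lemma cont_eval: "continuous_on UNIV (\<lambda>\<mu>::(nat \<Rightarrow> real) \<Rightarrow> real. \<mu> x)"
  by (rule continuous_on_product_coordinates)

lemma ce_cong: "constant_equivalent R J \<Longrightarrow> (\<And>x. x \<in> linf \<Longrightarrow> J' x = J x) \<Longrightarrow> constant_equivalent R J'"
  unfolding constant_equivalent_def by simp

lemma sup_norm_neg: "sup_norm (\<lambda>n. - x n) = sup_norm x"
  unfolding sup_norm_def by simp

context prefs
begin

definition p :: "(nat \<Rightarrow> real) \<Rightarrow> real" where
  "p x = - I (\<lambda>n. - x n)"

lemma p_sublin: "sublin p"
  unfolding sublin_def p_def
proof (intro conjI ballI allI impI)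
  fix x y assume xy: "x \<in> linf" "y \<in> linf"
  have "I (\<lambda>n. - x n) + I (\<lambda>n. - y n) \<le> I (\<lambda>n. - x n + - y n)"
    by (rule I_superadd) (intro linf_neg xy)+
  then show "- I (\<lambda>n. - (x n + y n)) \<le> - I (\<lambda>n. - x n) + - I (\<lambda>n. - y n)" by simp
next
  fix c :: real and x assume c: "0 \<le> c" and x: "x \<in> linf"
  have "I (\<lambda>n. c * - x n) = c * I (\<lambda>n. - x n)" by (rule I_scal[OF linf_neg[OF x] c])
  then show "- I (\<lambda>n. - (c * x n)) = c * - I (\<lambda>n. - x n)" by simp
qed

lemma lin_ge_I_ba:
  assumes l: "lin \<mu>" and ge: "\<forall>x\<in>linf. I x \<le> \<mu> x" and z: "\<forall>x. x \<notin> linf \<longrightarrow> \<mu> x = 0"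
  shows "\<mu> \<in> pa_N \<inter> Delta_N"
proof -
  have up: "\<mu> x \<le> - I (\<lambda>n. - x n)" if x: "x \<in> linf" for x
    using ge linf_neg[OF x] lin_neg[OF l x] by force
  have bd: "\<bar>\<mu> x\<bar> \<le> 1 * sup_norm x" if x: "x \<in> linf" for x
    using up[OF x] ge x I_ge_norm[OF x] I_ge_norm[OF linf_neg[OF x]] sup_norm_neg[of x] by force
  have ba: "\<mu> \<in> ba_N" unfolding ba_N_def using l z bd unfolding lin_def by blast
  have ind: "0 \<le> \<mu> (indicator A)" for A
  proof -
    have "I (\<lambda>n. 0) \<le> I (indicator A)" by (rule I_mono[OF linf_indicator linf_const]) (simp add: indicator_def)
    then show ?thesis using I_zero ge linf_indicator[of A] by force
  qed
  have one: "\<mu> (indicator UNIV) = 1"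
  proof -
    have "1 \<le> \<mu> (\<lambda>n. 1)" using ge linf_const[of 1] I_cs' by force
    moreover have "\<mu> (\<lambda>n. 1) \<le> 1" using up[OF linf_const[of 1]] I_cs'[of "-1"] by simp
    ultimately show ?thesis by simp
  qed
  have sing: "\<mu> (indicator {n}) = 0" for n
  proof -
    have "I (\<lambda>m. - indicator {n} m) \<le> \<mu> (\<lambda>m. - indicator {n} m)"
      using ge linf_neg[OF linf_indicator[of "{n}"]] by blast
    then have "0 \<le> \<mu> (\<lambda>m. - indicator {n} m)" using I_neg_ind[of n] by linarith
    then have "\<mu> (indicator {n}) \<le> 0" using lin_neg[OF l linf_indicator, of "{n}"] by simp
    then show ?thesis using ind[of "{n}"] by simp
  qed
  show ?thesis using ba ind one sing unfolding pa_N_def Delta_N_def by blast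
qed

lemma ex_mu:
  assumes x0: "x0 \<in> linf"
  shows "\<exists>\<mu>. \<mu> \<in> pa_N \<inter> Delta_N \<and> (\<forall>x\<in>linf. I x \<le> \<mu> x) \<and> \<mu> x0 = I x0"
proof -
  obtain \<mu> where l: "lin \<mu>" and le: "\<forall>x\<in>linf. \<mu> x \<le> p x" and e: "\<mu> x0 = - p (\<lambda>n. - x0 n)"
    and z: "\<forall>x. x \<notin> linf \<longrightarrow> \<mu> x = 0"
    using hahn_banach[OF p_sublin x0] by blast
  have ge: "\<forall>x\<in>linf. I x \<le> \<mu> x"
  proof
    fix x assume x: "x \<in> linf"
    have "\<mu> (\<lambda>n. - x n) \<le> - I x" using le linf_neg[OF x] unfolding p_def by force
    then show "I x \<le> \<mu> x" using lin_neg[OF l x] by simp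
  qed
  have "\<mu> x0 = I x0" using e unfolding p_def by simp
  then show ?thesis using lin_ge_I_ba[OF l ge z] ge by blast
qed

definition D1 :: "((nat \<Rightarrow> real) \<Rightarrow> real) set" where
  "D1 = {\<mu>. \<mu> \<in> pa_N \<inter> Delta_N \<and> (\<forall>x\<in>linf. I x \<le> \<mu> x)}"

lemma D1_ne: "D1 \<noteq> {}"
  using ex_mu[OF linf_const[of 0]] unfolding D1_def by blast

lemma D1_lin: "\<mu> \<in> D1 \<Longrightarrow> lin \<mu>"
  unfolding D1_def pa_N_def by (auto intro: ba_lin)

lemma D1_zero: "\<mu> \<in> D1 \<Longrightarrow> x \<notin> linf \<Longrightarrow> \<mu> x = 0"
  unfolding D1_def pa_N_def ba_N_def by auto

lemma D1_convex: "convex_fun_set D1"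
  unfolding convex_fun_set_def
proof (intro ballI allI impI)
  fix \<mu> \<nu> and t :: real assume m: "\<mu> \<in> D1" and n: "\<nu> \<in> D1" and t: "0 \<le> t \<and> t \<le> 1"
  define \<xi> where "\<xi> = (\<lambda>x. t * \<mu> x + (1 - t) * \<nu> x)"
  note lm = D1_lin[OF m] and ln = D1_lin[OF n]
  have l: "lin \<xi>" unfolding lin_def \<xi>_def
    using lin_add[OF lm] lin_add[OF ln] lin_scal[OF lm] lin_scal[OF ln] by (simp add: algebra_simps)
  have ge: "\<forall>x\<in>linf. I x \<le> \<xi> x"
  proof
    fix x assume x: "x \<in> linf"
    have "I x \<le> \<mu> x" "I x \<le> \<nu> x" using m n x unfolding D1_def by auto
    then have "t * I x \<le> t * \<mu> x" "(1 - t) * I x \<le> (1 - t) * \<nu> x" using t by (auto intro: mult_left_mono)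
    then show "I x \<le> \<xi> x" unfolding \<xi>_def by (simp add: algebra_simps)
  qed
  have z: "\<forall>x. x \<notin> linf \<longrightarrow> \<xi> x = 0" unfolding \<xi>_def using D1_zero[OF m] D1_zero[OF n] by simp
  show "(\<lambda>x. t * \<mu> x + (1 - t) * \<nu> x) \<in> D1"
    using lin_ge_I_ba[OF l ge z] ge unfolding D1_def \<xi>_def by blast
qed

lemma D1_min: "x \<in> linf \<Longrightarrow> \<exists>\<mu>\<in>D1. \<forall>\<nu>\<in>D1. \<mu> x \<le> \<nu> x"
proof -
  assume x: "x \<in> linf"
  obtain \<mu> where "\<mu> \<in> pa_N \<inter> Delta_N" "\<forall>x\<in>linf. I x \<le> \<mu> x" "\<mu> x = I x" using ex_mu[OF x] by blast
  moreover have "\<forall>\<nu>\<in>D1. I x \<le> \<nu> x" using x unfolding D1_def by auto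
  ultimately show ?thesis unfolding D1_def by auto
qed

lemma D1_INF: "x \<in> linf \<Longrightarrow> (INF \<mu>\<in>D1. \<mu> x) = I x"
proof -
  assume x: "x \<in> linf"
  obtain \<mu> where "\<mu> \<in> pa_N \<inter> Delta_N" "\<forall>x\<in>linf. I x \<le> \<mu> x" "\<mu> x = I x" using ex_mu[OF x] by blast
  then have "\<mu> \<in> D1" unfolding D1_def by auto
  moreover have "\<forall>\<nu>\<in>D1. I x \<le> \<nu> x" using x unfolding D1_def by auto
  moreover have "I x \<in> (\<lambda>\<mu>. \<mu> x) ` D1"
    by (rule image_eqI[of _ _ \<mu>]) (use \<open>\<mu> x = I x\<close> calculation in auto)
  ultimately show ?thesis by (intro cInf_eq_minimum) auto
qed

lemma D1_compact: "compact D1"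
proof -
  define a where "a = (\<lambda>x. if x \<in> linf then I x else 0)"
  define b where "b = (\<lambda>x. if x \<in> linf then - I (\<lambda>n. - x n) else 0)"
  define K where "K = (PiE UNIV (\<lambda>x. {a x..b x}) :: ((nat \<Rightarrow> real) \<Rightarrow> real) set)"
  define C where "C = {\<mu>::(nat \<Rightarrow> real) \<Rightarrow> real.
     (\<forall>x\<in>linf. \<forall>y\<in>linf. \<mu> (\<lambda>n. x n + y n) = \<mu> x + \<mu> y)
   \<and> (\<forall>c. \<forall>x\<in>linf. \<mu> (\<lambda>n. c * x n) = c * \<mu> x)
   \<and> (\<forall>x\<in>-linf. \<mu> x = 0)
   \<and> (\<forall>A. 0 \<le> \<mu> (indicator A))
   \<and> \<mu> (indicator UNIV) = 1
   \<and> (\<forall>n. \<mu> (indicator {n}) = 0)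
   \<and> (\<forall>x\<in>linf. I x \<le> \<mu> x)}"
  have "compactin (product_topology (\<lambda>_. euclidean) UNIV) K"
    unfolding K_def compactin_PiE by auto
  then have cK: "compact K" unfolding euclidean_product_topology by simp
  have ce: "continuous_on UNIV (\<lambda>\<mu>::(nat \<Rightarrow> real) \<Rightarrow> real. \<mu> x)" for x by (rule cont_eval)
  have cC: "closed C"
    unfolding C_def
    apply (intro closed_Collect_conj closed_ball_all closed_Collect_all)
    apply (rule closed_Collect_eq, intro continuous_intros ce, intro continuous_intros ce)+
    apply (rule closed_Collect_le, intro continuous_intros, intro continuous_intros ce)+
    apply (rule closed_Collect_eq, intro continuous_intros ce, intro continuous_intros)+
    apply (rule closed_Collect_le, intro continuous_intros, intro continuous_intros ce)
    done
  have "D1 = K \<inter> C"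
  proof (intro equalityI subsetI)
    fix \<mu> assume m: "\<mu> \<in> D1"
    have l: "lin \<mu>" using D1_lin[OF m] .
    have "\<mu> \<in> K" unfolding K_def PiE_UNIV_domain
    proof (rule Pi_I)
      fix x show "\<mu> x \<in> {a x..b x}"
      proof (cases "x \<in> linf")
        case True
        have "I (\<lambda>n. - x n) \<le> \<mu> (\<lambda>n. - x n)" using m linf_neg[OF True] unfolding D1_def by blast
        then have "\<mu> x \<le> - I (\<lambda>n. - x n)" using lin_neg[OF l True] by simp
        moreover have "I x \<le> \<mu> x" using m True unfolding D1_def by blast
        ultimately show ?thesis unfolding a_def b_def using True by simp
      next
        case False then show ?thesis unfolding a_def b_def using D1_zero[OF m] by simp
      qed
    qed
    moreover have "\<mu> \<in> C" using m l D1_zero[OF m] unfolding D1_def C_def lin_def pa_N_def Delta_N_def by auto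
    ultimately show "\<mu> \<in> K \<inter> C" by blast
  next
    fix \<mu> assume m: "\<mu> \<in> K \<inter> C"
    have l: "lin \<mu>" using m unfolding C_def lin_def by blast
    have ge: "\<forall>x\<in>linf. I x \<le> \<mu> x" using m unfolding C_def by blast
    have z: "\<forall>x. x \<notin> linf \<longrightarrow> \<mu> x = 0" using m unfolding C_def by auto
    show "\<mu> \<in> D1" using lin_ge_I_ba[OF l ge z] ge unfolding D1_def by blast
  qed
  then show ?thesis using compact_Int_closed[OF cK cC] by simp
qed

lemma D1_unique:
  assumes ne: "D \<noteq> {}" and cv: "convex_fun_set D" and cp: "compact D" and sub: "D \<subseteq> pa_N \<inter> Delta_N"
    and mn: "\<forall>x\<in>linf. \<exists>\<mu>\<in>D. \<forall>\<nu>\<in>D. \<mu> x \<le> \<nu> x"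
    and un: "\<forall>J. constant_equivalent R J \<longrightarrow> (\<forall>x\<in>linf. J x = (INF \<mu>\<in>D. \<mu> x))"
  shows "D = D1"
proof -
  have IeqD: "I x = (INF \<mu>\<in>D. \<mu> x)" if "x \<in> linf" for x using un ce_I that by blast
  have lowD: "I x \<le> \<mu> x" if x: "x \<in> linf" and m: "\<mu> \<in> D" for x \<mu>
  proof -
    have "\<exists>\<mu>0\<in>D. \<forall>\<nu>\<in>D. \<mu>0 x \<le> \<nu> x" using mn x by simp
    then obtain \<mu>0 where \<mu>0: "\<mu>0 \<in> D" "\<forall>\<nu>\<in>D. \<mu>0 x \<le> \<nu> x" by blast
    have bb: "bdd_below ((\<lambda>\<nu>. \<nu> x) ` D)" by (rule bdd_belowI2[of D "\<mu>0 x"]) (use \<mu>0 in simp)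
    show ?thesis unfolding IeqD[OF x] by (rule cINF_lower[OF bb m])
  qed
  have sub1: "D \<subseteq> D1" unfolding D1_def using sub lowD by blast
  have Dl: "lin \<nu>" if "\<nu> \<in> D" for \<nu> using sub that unfolding pa_N_def by (auto intro: ba_lin)
  have Dz: "\<nu> x = 0" if "\<nu> \<in> D" "x \<notin> linf" for \<nu> x using sub that unfolding pa_N_def ba_N_def by auto
  have "D1 \<subseteq> D"
  proof
    fix \<mu> assume m: "\<mu> \<in> D1"
    show "\<mu> \<in> D"
    proof (rule ccontr)
      assume nm: "\<mu> \<notin> D"
      have cover: "D \<subseteq> (\<Union>x\<in>linf. {f. f x \<noteq> \<mu> x})"
      proof
        fix \<nu> assume n: "\<nu> \<in> D"
        then have "\<nu> \<noteq> \<mu>" using nm by blast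
        then obtain x where x: "\<nu> x \<noteq> \<mu> x" by (meson ext)
        have "x \<in> linf"
        proof (rule ccontr)
          assume "x \<notin> linf"
          then show False using x Dz[OF n] D1_zero[OF m] by simp
        qed
        then show "\<nu> \<in> (\<Union>x\<in>linf. {f. f x \<noteq> \<mu> x})" using x by blast
      qed
      have opn: "open {f::(nat \<Rightarrow> real) \<Rightarrow> real. f x \<noteq> \<mu> x}" for x
        by (rule open_Collect_neq[OF cont_eval continuous_on_const])
      obtain F where F: "F \<subseteq> linf" "finite F" "D \<subseteq> (\<Union>x\<in>F. {f. f x \<noteq> \<mu> x})"
        by (rule compactE_image[OF cp opn cover])
      define d where "d = (\<lambda>\<nu>::(nat \<Rightarrow> real) \<Rightarrow> real. \<Sum>x\<in>F. (\<nu> x - \<mu> x)^2)"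
      have dc: "continuous_on D d" unfolding d_def
        by (intro continuous_intros continuous_on_subset[OF cont_eval]) auto
      obtain \<nu>0 where n0: "\<nu>0 \<in> D" and n0min: "\<forall>\<nu>\<in>D. d \<nu>0 \<le> d \<nu>"
        using continuous_attains_inf[OF cp ne dc] by blast
      define a where "a = (\<lambda>x. \<nu>0 x - \<mu> x)"
      have dpos: "d \<nu>0 > 0"
      proof -
        obtain x where x: "x \<in> F" "\<nu>0 x \<noteq> \<mu> x" using F(3) n0 by blast
        have "(\<nu>0 x - \<mu> x)^2 \<le> d \<nu>0" unfolding d_def
          by (rule member_le_sum[OF x(1)]) (auto simp: F(2))
        moreover have "(\<nu>0 x - \<mu> x)^2 > 0" using x(2) by simp
        ultimately show ?thesis by linarith
      qed
      have Sge: "0 \<le> (\<Sum>x\<in>F. a x * (\<nu> x - \<nu>0 x))" if n: "\<nu> \<in> D" for \<nu>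
      proof (rule ccontr)
        define S where "S = (\<Sum>x\<in>F. a x * (\<nu> x - \<nu>0 x))"
        define Q where "Q = (\<Sum>x\<in>F. (\<nu> x - \<nu>0 x)^2)"
        assume "\<not> 0 \<le> (\<Sum>x\<in>F. a x * (\<nu> x - \<nu>0 x))"
        then have Sn: "S < 0" unfolding S_def by simp
        have Q0: "Q \<ge> 0" unfolding Q_def by (intro sum_nonneg) auto
        define t where "t = (if Q = 0 then 1 else min 1 (- S / Q))"
        have t0: "0 < t" "t \<le> 1" unfolding t_def using Sn Q0 by (auto simp: field_simps)
        have tQ: "t * Q \<le> - S"
        proof (cases "Q = 0")
          case True then show ?thesis unfolding t_def using Sn by simp
        next
          case False
          then have "Q > 0" using Q0 by simp
          then have "t * Q \<le> (- S / Q) * Q" unfolding t_def by (intro mult_right_mono) auto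
          then show ?thesis using \<open>Q > 0\<close> by simp
        qed
        define \<nu>t where "\<nu>t = (\<lambda>x. t * \<nu> x + (1 - t) * \<nu>0 x)"
        have ntD: "\<nu>t \<in> D" using cv n n0 t0 unfolding convex_fun_set_def \<nu>t_def by auto
        have "d \<nu>t = (\<Sum>x\<in>F. (a x + t * (\<nu> x - \<nu>0 x))^2)"
          unfolding d_def \<nu>t_def a_def by (rule sum.cong) (auto simp: algebra_simps)
        also have "\<dots> = (\<Sum>x\<in>F. a x ^ 2 + 2 * t * (a x * (\<nu> x - \<nu>0 x)) + t^2 * (\<nu> x - \<nu>0 x)^2)"
          by (rule sum.cong) (auto simp: power2_eq_square algebra_simps)
        also have "\<dots> = d \<nu>0 + 2 * t * S + t^2 * Q"
          unfolding d_def S_def Q_def a_def by (simp add: sum.distrib sum_distrib_left)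
        finally have "d \<nu>t = d \<nu>0 + 2 * t * S + t^2 * Q" .
        then have "0 \<le> 2 * t * S + t^2 * Q" using n0min ntD by force
        then have "0 \<le> t * (2 * S + t * Q)" by (simp add: power2_eq_square algebra_simps)
        then have "0 \<le> 2 * S + t * Q" using t0 by (simp add: zero_le_mult_iff)
        then show False using tQ Sn by linarith
      qed
      define z where "z = (\<lambda>n. \<Sum>x\<in>F. a x * x n)"
      have zl: "z \<in> linf" unfolding z_def
        by (rule linf_sum[OF F(2)]) (use F(1) in \<open>auto intro: linf_scal\<close>)
      have ev: "\<xi> z = (\<Sum>x\<in>F. a x * \<xi> x)" if l: "lin \<xi>" for \<xi>
      proof -
        have "\<xi> z = (\<Sum>x\<in>F. \<xi> (\<lambda>n. a x * x n))" unfolding z_def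
          by (rule lin_sum[OF l F(2)]) (use F(1) in \<open>auto intro: linf_scal\<close>)
        also have "\<dots> = (\<Sum>x\<in>F. a x * \<xi> x)"
          by (rule sum.cong) (use F(1) lin_scal[OF l] in auto)
        finally show ?thesis .
      qed
      have "\<nu>0 z \<le> \<nu> z" if n: "\<nu> \<in> D" for \<nu>
      proof -
        have "\<nu> z - \<nu>0 z = (\<Sum>x\<in>F. a x * (\<nu> x - \<nu>0 x))"
          using ev[OF Dl[OF n]] ev[OF Dl[OF n0]] by (simp add: sum_subtractf algebra_simps)
        then show ?thesis using Sge[OF n] by simp
      qed
      then have "(INF \<nu>\<in>D. \<nu> z) = \<nu>0 z" by (intro cInf_eq_minimum) (use n0 in auto)
      then have Iz: "I z = \<nu>0 z" using IeqD[OF zl] by simp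
      have "I z \<le> \<mu> z" using m zl unfolding D1_def by blast
      moreover have "\<mu> z - \<nu>0 z = - d \<nu>0"
      proof -
        have "\<mu> z - \<nu>0 z = (\<Sum>x\<in>F. a x * (\<mu> x - \<nu>0 x))"
          using ev[OF D1_lin[OF m]] ev[OF Dl[OF n0]] by (simp add: sum_subtractf algebra_simps)
        also have "\<dots> = (\<Sum>x\<in>F. - ((\<nu>0 x - \<mu> x)^2))"
          unfolding a_def by (rule sum.cong) (auto simp: power2_eq_square algebra_simps)
        finally show ?thesis unfolding d_def by (simp add: sum_negf)
      qed
      ultimately show False using Iz dpos by linarith
    qed
  qed
  then show ?thesis using sub1 by blast
qed

end

theorem theorem6:
  fixes R :: "(nat \<Rightarrow> real) \<Rightarrow> (nat \<Rightarrow> real) \<Rightarrow> bool"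
  shows "(weak_order R \<and> monotonicity R \<and> continuity R \<and> ICRP R \<and> convexity R
          \<and> ISU R \<and> IFPIS R)
    \<longleftrightarrow>
    (\<exists>!D. D \<noteq> {} \<and> convex_fun_set D \<and> compact D \<and> D \<subseteq> pa_N \<inter> Delta_N
       \<and> (\<forall>x\<in>linf. \<exists>\<mu>\<in>D. \<forall>\<nu>\<in>D. \<mu> x \<le> \<nu> x)
       \<and> constant_equivalent R (\<lambda>x. INF \<mu>\<in>D. \<mu> x)
       \<and> (\<forall>J. constant_equivalent R J \<longrightarrow> (\<forall>x\<in>linf. J x = (INF \<mu>\<in>D. \<mu> x))))"
proof
  assume H: "weak_order R \<and> monotonicity R \<and> continuity R \<and> ICRP R \<and> convexity R \<and> ISU R \<and> IFPIS R"
  then interpret prefs R by unfold_locales auto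
  show "\<exists>!D. D \<noteq> {} \<and> convex_fun_set D \<and> compact D \<and> D \<subseteq> pa_N \<inter> Delta_N
       \<and> (\<forall>x\<in>linf. \<exists>\<mu>\<in>D. \<forall>\<nu>\<in>D. \<mu> x \<le> \<nu> x)
       \<and> constant_equivalent R (\<lambda>x. INF \<mu>\<in>D. \<mu> x)
       \<and> (\<forall>J. constant_equivalent R J \<longrightarrow> (\<forall>x\<in>linf. J x = (INF \<mu>\<in>D. \<mu> x)))"
  proof (rule ex1I[of _ D1])
    have ce1: "constant_equivalent R (\<lambda>x. INF \<mu>\<in>D1. \<mu> x)"
      by (rule ce_cong[OF ce_I]) (rule D1_INF)
    have un1: "\<forall>J. constant_equivalent R J \<longrightarrow> (\<forall>x\<in>linf. J x = (INF \<mu>\<in>D1. \<mu> x))"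
      using ce_unique D1_INF by simp
    show "D1 \<noteq> {} \<and> convex_fun_set D1 \<and> compact D1 \<and> D1 \<subseteq> pa_N \<inter> Delta_N
       \<and> (\<forall>x\<in>linf. \<exists>\<mu>\<in>D1. \<forall>\<nu>\<in>D1. \<mu> x \<le> \<nu> x)
       \<and> constant_equivalent R (\<lambda>x. INF \<mu>\<in>D1. \<mu> x)
       \<and> (\<forall>J. constant_equivalent R J \<longrightarrow> (\<forall>x\<in>linf. J x = (INF \<mu>\<in>D1. \<mu> x)))"
      using D1_ne D1_convex D1_compact D1_min ce1 un1 unfolding D1_def[of] by (auto simp: D1_def)
  next
    fix D assume "D \<noteq> {} \<and> convex_fun_set D \<and> compact D \<and> D \<subseteq> pa_N \<inter> Delta_N
       \<and> (\<forall>x\<in>linf. \<exists>\<mu>\<in>D. \<forall>\<nu>\<in>D. \<mu> x \<le> \<nu> x)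
       \<and> constant_equivalent R (\<lambda>x. INF \<mu>\<in>D. \<mu> x)
       \<and> (\<forall>J. constant_equivalent R J \<longrightarrow> (\<forall>x\<in>linf. J x = (INF \<mu>\<in>D. \<mu> x)))"
    then show "D = D1" using D1_unique by blast
  qed
next
  assume "\<exists>!D. D \<noteq> {} \<and> convex_fun_set D \<and> compact D \<and> D \<subseteq> pa_N \<inter> Delta_N
       \<and> (\<forall>x\<in>linf. \<exists>\<mu>\<in>D. \<forall>\<nu>\<in>D. \<mu> x \<le> \<nu> x)
       \<and> constant_equivalent R (\<lambda>x. INF \<mu>\<in>D. \<mu> x)
       \<and> (\<forall>J. constant_equivalent R J \<longrightarrow> (\<forall>x\<in>linf. J x = (INF \<mu>\<in>D. \<mu> x)))"
  then obtain D where "D \<noteq> {}" "D \<subseteq> pa_N \<inter> Delta_N" "\<forall>x\<in>linf. \<exists>\<mu>\<in>D. \<forall>\<nu>\<in>D. \<mu> x \<le> \<nu> x"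
    "constant_equivalent R (\<lambda>x. INF \<mu>\<in>D. \<mu> x)" by blast
  then show "weak_order R \<and> monotonicity R \<and> continuity R \<and> ICRP R \<and> convexity R \<and> ISU R \<and> IFPIS R"
    by (rule partA)
qed


end
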